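(* Let $\beta\in(-1,1)$ and $\varphi\in[0,1)$. Let $X_0$ be a random variable with values on the unit circle $\partial B(0,1)\subset\mathbb{C}$, and for $n\ge1$ let $$X_n=\frac{X_{n-1}+\beta}{\beta X_{n-1}+1}\,\epsilon_n,$$ where $(\epsilon_n)_{n\ge1}$ are i.i.d., independent of $X_0$, with the wrapped Cauchy density $f_\varphi(z)=\frac{1}{2\pi}\frac{1-\varphi^2}{|z-\varphi|^2}$, $z\in\partial B(0,1)$, with respect to the arc length measure $\nu$ on $\partial B(0,1)$. Then this Markov chain admits a unique invariant distribution $\mu$. Moreover there exists $\epsilon_0>0$ such that $v:=\inf_{u\in\partial B(0,1)}\inf_{0<\epsilon<\epsilon_0}\epsilon^{-1}\nu(\partial B(0,1)\cap B(u,\epsilon))$ is a finite positive constant, and, if $X_0$ is distributed as $\mu$, then for any $\alpha\in(0,1)$, any sufficiently small $\epsilon>0$ and any $$n\ge\frac{2}{\kappa v\epsilon}\Big(\ln\frac1\alpha+\ln\frac{4}{\epsilon\kappa v}\Big),\qquad \kappa=\frac{1}{2\pi}\frac{1-\varphi}{1+\varphi},$$ one has $d_H(\{X_1,\ldots,X_n\},\partial B(0,1))\le\epsilon$ with probability at least $1-\alpha$.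
   Context: $B(u,\epsilon)$ is the closed Euclidean ball in $\mathbb{C}\cong\mathbb{R}^2$. $d_H$ is the Hausdorff distance $d_H(A,B)=\max(\sup_{x\in A}\inf_{y\in B}|x-y|,\sup_{x\in B}\inf_{y\in A}|x-y|)$. *)

theory Defs
  imports "HOL-Probability.Probability"
begin

definition arc_measure :: "complex measure" where
  "arc_measure = distr (restrict_space lborel {0..<2*pi}) borel (\<lambda>t. cis t)"

definition wc_density :: "real \<Rightarrow> complex \<Rightarrow> real" where
  "wc_density \<phi> z = (1 - \<phi>\<^sup>2) / (2 * pi * (cmod (z - complex_of_real \<phi>))\<^sup>2)"

definition wrapped_cauchy :: "real \<Rightarrow> complex measure" where
  "wrapped_cauchy \<phi> = density arc_measure (\<lambda>z. ennreal (wc_density \<phi> z))"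

definition mob :: "real \<Rightarrow> complex \<Rightarrow> complex" where
  "mob \<beta> x = (x + complex_of_real \<beta>) / (complex_of_real \<beta> * x + 1)"

definition trans_kernel :: "real \<Rightarrow> real \<Rightarrow> complex \<Rightarrow> complex measure" where
  "trans_kernel \<beta> \<phi> x = distr (wrapped_cauchy \<phi>) borel (\<lambda>e. mob \<beta> x * e)"

definition invariant_distr :: "real \<Rightarrow> real \<Rightarrow> complex measure \<Rightarrow> bool" where
  "invariant_distr \<beta> \<phi> \<mu> \<longleftrightarrow>
     prob_space \<mu> \<and> sets \<mu> = sets borel \<and> emeasure \<mu> (sphere 0 1) = 1 \<and>
     (\<forall>A\<in>sets borel. emeasure \<mu> A = (\<integral>\<^sup>+ x. emeasure (trans_kernel \<beta> \<phi> x) A \<partial>\<mu>))"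

primrec chain :: "real \<Rightarrow> ('a \<Rightarrow> complex) \<Rightarrow> (nat \<Rightarrow> 'a \<Rightarrow> complex) \<Rightarrow> nat \<Rightarrow> 'a \<Rightarrow> complex" where
  "chain \<beta> X0 eps 0 \<omega> = X0 \<omega>"
| "chain \<beta> X0 eps (Suc n) \<omega> = mob \<beta> (chain \<beta> X0 eps n \<omega>) * eps (Suc n) \<omega>"

definition haus_dist :: "complex set \<Rightarrow> complex set \<Rightarrow> real" where
  "haus_dist A B = max (SUP x\<in>A. INF y\<in>B. dist x y) (SUP x\<in>B. INF y\<in>A. dist x y)"

definition v_const :: "real \<Rightarrow> ereal" where
  "v_const \<epsilon>0 = (INF u\<in>sphere 0 1. INF e\<in>{0<..<\<epsilon>0}.
       ereal (measure arc_measure (sphere 0 1 \<inter> cball u e) / e))"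

end

theory Submission
  imports Defs
begin

lemma arc_sets[simp, measurable_cong]: "sets arc_measure = sets borel"
  by (simp add: arc_measure_def)

lemma arc_space[simp]: "space arc_measure = UNIV"
  using sets_eq_imp_space_eq[OF arc_sets] by simp

lemma cis_measurable[measurable]: "cis \<in> borel_measurable borel"
  by (intro borel_measurable_continuous_onI continuous_intros)

lemma cis_period[simp]: "cis (t + 2*pi) = cis t"
  by (simp add: cis.ctr)

lemma arc_nn_integral:
  assumes [measurable]: "h \<in> borel_measurable borel"
  shows "(\<integral>\<^sup>+ z. h z \<partial>arc_measure) = (\<integral>\<^sup>+ t. h (cis t) * indicator {0..<2*pi} t \<partial>lborel)"
proof -
  have "(\<integral>\<^sup>+ z. h z \<partial>arc_measure) = (\<integral>\<^sup>+ t. h (cis t) \<partial>restrict_space lborel {0..<2*pi})"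
    unfolding arc_measure_def
    by (subst nn_integral_distr) (auto intro!: measurable_restrict_space1)
  also have "\<dots> = (\<integral>\<^sup>+ t. h (cis t) * indicator {0..<2*pi} t \<partial>lborel)"
    by (subst nn_integral_restrict_space) (auto simp: nn_integral_set_ennreal mult.commute
         intro!: nn_integral_cong split: split_indicator)
  finally show ?thesis .
qed

lemma arc_emeasure:
  assumes [measurable]: "A \<in> sets borel"
  shows "emeasure arc_measure A = (\<integral>\<^sup>+ t. indicator A (cis t) * indicator {0..<2*pi} t \<partial>lborel)"
  using arc_nn_integral[of "indicator A"] by simp

lemma periodic_shift:
  fixes g :: "real \<Rightarrow> ennreal"
  assumes [measurable]: "g \<in> borel_measurable borel" and per: "\<And>t. g (t + 2*pi) = g t"
    and s: "0 \<le> s" "s \<le> 2*pi"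
  shows "(\<integral>\<^sup>+ t. g (t + s) * indicator {0..<2*pi} t \<partial>lborel) = (\<integral>\<^sup>+ t. g t * indicator {0..<2*pi} t \<partial>lborel)"
proof -
  have "(\<integral>\<^sup>+ t. g t * indicator {s..<s+2*pi} t \<partial>lborel)
      = (\<integral>\<^sup>+ t. g (s + t) * indicator {s..<s+2*pi} (s + t) \<partial>lborel)"
    using nn_integral_real_affine[of "\<lambda>t. g t * indicator {s..<s+2*pi} t" 1 s] by simp
  also have "\<dots> = (\<integral>\<^sup>+ t. g (t + s) * indicator {0..<2*pi} t \<partial>lborel)"
    by (auto intro!: nn_integral_cong simp: add.commute split: split_indicator)
  finally have 1: "(\<integral>\<^sup>+ t. g (t + s) * indicator {0..<2*pi} t \<partial>lborel) = (\<integral>\<^sup>+ t. g t * indicator {s..<s+2*pi} t \<partial>lborel)" ..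
  have "(\<integral>\<^sup>+ t. g t * indicator {2*pi..<2*pi+s} t \<partial>lborel)
      = (\<integral>\<^sup>+ t. g (2*pi + t) * indicator {2*pi..<2*pi+s} (2*pi + t) \<partial>lborel)"
    using nn_integral_real_affine[of "\<lambda>t. g t * indicator {2*pi..<2*pi+s} t" 1 "2*pi"] by simp
  also have "\<dots> = (\<integral>\<^sup>+ t. g t * indicator {0..<s} t \<partial>lborel)"
    using per by (auto intro!: nn_integral_cong simp: add.commute split: split_indicator)
  finally have 2: "(\<integral>\<^sup>+ t. g t * indicator {2*pi..<2*pi+s} t \<partial>lborel) = (\<integral>\<^sup>+ t. g t * indicator {0..<s} t \<partial>lborel)" .
  have "(\<integral>\<^sup>+ t. g t * indicator {s..<s+2*pi} t \<partial>lborel)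
     = (\<integral>\<^sup>+ t. g t * indicator {s..<2*pi} t + g t * indicator {2*pi..<2*pi+s} t \<partial>lborel)"
    using s by (intro nn_integral_cong) (auto split: split_indicator)
  also have "\<dots> = (\<integral>\<^sup>+ t. g t * indicator {s..<2*pi} t \<partial>lborel) + (\<integral>\<^sup>+ t. g t * indicator {0..<s} t \<partial>lborel)"
    by (subst nn_integral_add) (auto simp: 2)
  also have "\<dots> = (\<integral>\<^sup>+ t. g t * indicator {0..<s} t + g t * indicator {s..<2*pi} t \<partial>lborel)"
    by (subst nn_integral_add) (auto simp: add.commute)
  also have "\<dots> = (\<integral>\<^sup>+ t. g t * indicator {0..<2*pi} t \<partial>lborel)"
    using s by (intro nn_integral_cong) (auto split: split_indicator)
  finally show ?thesis using 1 by simp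
qed

lemma unit_cis_repr:
  fixes w :: complex assumes "cmod w = 1"
  shows "\<exists>s. 0 \<le> s \<and> s \<le> 2*pi \<and> w = cis s"
proof -
  have "w \<noteq> 0" using assms by auto
  then have w: "w = cis (Arg w)" using assms by (simp add: cis_Arg sgn_div_norm)
  show ?thesis
  proof (cases "Arg w \<ge> 0")
    case True then show ?thesis using Arg_bounded[of w] w by (intro exI[of _ "Arg w"]) auto
  next
    case False
    have "cis (Arg w + 2*pi) = cis (Arg w)" by simp
    then show ?thesis using False Arg_bounded[of w] w by (intro exI[of _ "Arg w + 2*pi"]) auto
  qed
qed

lemma arc_rotate:
  assumes [measurable]: "h \<in> borel_measurable borel" and w: "cmod w = 1"
  shows "(\<integral>\<^sup>+ z. h (w * z) \<partial>arc_measure) = (\<integral>\<^sup>+ z. h z \<partial>arc_measure)"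
proof -
  obtain s where s: "0 \<le> s" "s \<le> 2*pi" "w = cis s" using unit_cis_repr[OF w] by blast
  have "(\<integral>\<^sup>+ z. h (w * z) \<partial>arc_measure) = (\<integral>\<^sup>+ t. h (cis (t + s)) * indicator {0..<2*pi} t \<partial>lborel)"
    by (subst arc_nn_integral) (auto simp: s cis_mult add.commute)
  also have "\<dots> = (\<integral>\<^sup>+ t. h (cis t) * indicator {0..<2*pi} t \<partial>lborel)"
    using s by (intro periodic_shift[where g = "\<lambda>t. h (cis t)"]) auto
  also have "\<dots> = (\<integral>\<^sup>+ z. h z \<partial>arc_measure)" by (simp add: arc_nn_integral)
  finally show ?thesis .
qed

lemma chord_le:
  "cmod (cis t - cis s) \<le> \<bar>t - s\<bar>"
proof -
  have "(cmod (cis t - cis s))\<^sup>2 = (cos t - cos s)\<^sup>2 + (sin t - sin s)\<^sup>2"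
    by (simp add: cmod_power2)
  also have "\<dots> = 2 - 2 * cos (t - s)"
    by (simp add: cos_diff power2_eq_square algebra_simps)
  also have "cos (t - s) = 1 - 2 * (sin ((t - s)/2))\<^sup>2"
  proof -
    have e: "t - s = 2 * ((t - s)/2)" by simp
    have "cos (t - s) = cos (2 * ((t - s)/2))" using e by (rule arg_cong)
    also have "\<dots> = 1 - 2 * (sin ((t - s)/2))\<^sup>2" by (rule cos_double_sin)
    finally show ?thesis .
  qed
  finally have eq: "(cmod (cis t - cis s))\<^sup>2 = 4 * (sin ((t - s)/2))\<^sup>2"
    by simp
  have "\<bar>sin ((t - s)/2)\<bar>\<^sup>2 \<le> \<bar>(t - s)/2\<bar>\<^sup>2"
    by (intro power_mono abs_sin_x_le_abs_x) auto
  then have "(sin ((t - s)/2))\<^sup>2 \<le> ((t - s)/2)\<^sup>2" by (simp only: power2_abs)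
  then have "(cmod (cis t - cis s))\<^sup>2 \<le> \<bar>t - s\<bar>\<^sup>2"
    unfolding eq power2_abs by (simp add: power_divide)
  then show ?thesis
    by (rule power2_le_imp_le) auto
qed

lemma arc_UNIV: "emeasure arc_measure UNIV = 2 * pi"
  by (simp add: arc_emeasure)

lemma arc_sphere_compl: "emeasure arc_measure (- sphere 0 1) = 0"
  by (subst arc_emeasure) auto

lemma AE_arc_sphere: "AE z in arc_measure. z \<in> sphere 0 1"
  by (rule AE_I[OF _ arc_sphere_compl]) auto

lemma arc_finite[simp]: "finite_measure arc_measure"
  by (rule finite_measureI) (simp add: arc_UNIV)

lemma arc_interval:
  assumes "0 \<le> a" "a \<le> b" "b \<le> 2*pi"
  shows "emeasure arc_measure (cis ` {a..b}) \<ge> ennreal (b - a)"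
proof -
  have cl: "closed (cis ` {a..b})"
    by (intro compact_imp_closed compact_continuous_image continuous_intros) auto
  then have [measurable]: "cis ` {a..b} \<in> sets borel" by auto
  have "ennreal (b - a) = emeasure lborel {a..<b}" using assms by simp
  also have "\<dots> = (\<integral>\<^sup>+ t. indicator {a..<b} t \<partial>lborel)" by simp
  also have "\<dots> \<le> (\<integral>\<^sup>+ t. indicator (cis ` {a..b}) (cis t) * indicator {0..<2*pi} t \<partial>lborel)"
    using assms by (intro nn_integral_mono) (auto split: split_indicator)
  also have "\<dots> = emeasure arc_measure (cis ` {a..b})" by (simp add: arc_emeasure)
  finally show ?thesis .
qed

lemma mob_den_nz:
  assumes "-1 < \<beta>" "\<beta> < 1" "cmod x = 1"
  shows "complex_of_real \<beta> * x + 1 \<noteq> 0"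
proof
  assume "complex_of_real \<beta> * x + 1 = 0"
  then have "complex_of_real \<beta> * x = -1" by (simp add: eq_neg_iff_add_eq_0)
  then have "cmod (complex_of_real \<beta> * x) = 1" by simp
  then have "\<bar>\<beta>\<bar> = 1" using assms by (simp add: norm_mult)
  then show False using assms by auto
qed

lemma mob_unit:
  assumes "-1 < \<beta>" "\<beta> < 1" "cmod x = 1"
  shows "cmod (mob \<beta> x) = 1"
proof -
  have nz: "complex_of_real \<beta> * x + 1 \<noteq> 0" by (rule mob_den_nz[OF assms])
  have x2: "(Re x)\<^sup>2 + (Im x)\<^sup>2 = 1" using assms by (simp add: cmod_def)
  have "(cmod (x + complex_of_real \<beta>))\<^sup>2 = (cmod (complex_of_real \<beta> * x + 1))\<^sup>2"
  proof -
    have a: "(cmod (x + complex_of_real \<beta>))\<^sup>2 = ((Re x)\<^sup>2 + (Im x)\<^sup>2) + 2*\<beta>*Re x + \<beta>\<^sup>2"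
      unfolding cmod_power2 by (simp add: power2_eq_square algebra_simps)
    have b: "(cmod (complex_of_real \<beta> * x + 1))\<^sup>2 = \<beta>\<^sup>2 * ((Re x)\<^sup>2 + (Im x)\<^sup>2) + 2*\<beta>*Re x + 1"
      unfolding cmod_power2 by (simp add: power2_eq_square algebra_simps)
    show ?thesis unfolding a b x2 by simp
  qed
  then have "cmod (x + complex_of_real \<beta>) = cmod (complex_of_real \<beta> * x + 1)"
    by (simp add: power2_eq_iff_nonneg)
  then show ?thesis using nz by (simp add: mob_def norm_divide)
qed

lemma mob_measurable[measurable]: "mob \<beta> \<in> borel_measurable borel"
  unfolding mob_def by measurable

lemma wc_measurable[measurable]: "wc_density \<phi> \<in> borel_measurable borel"
  unfolding wc_density_def by measurable

lemma wc_nonneg: assumes "0 \<le> \<phi>" "\<phi> < 1" shows "0 \<le> wc_density \<phi> w"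
  using assms unfolding wc_density_def by (auto intro!: divide_nonneg_nonneg simp: abs_square_le_1)

lemma wc_lower:
  assumes "0 \<le> \<phi>" "\<phi> < 1" "cmod w = 1"
  shows "(1 / (2 * pi)) * ((1 - \<phi>) / (1 + \<phi>)) \<le> wc_density \<phi> w"
proof -
  have "cmod (w - complex_of_real \<phi>) \<le> cmod w + cmod (complex_of_real \<phi>)" by (rule norm_triangle_ineq4)
  then have le: "cmod (w - complex_of_real \<phi>) \<le> 1 + \<phi>" using assms by simp
  have pos: "cmod (w - complex_of_real \<phi>) > 0"
  proof -
    have "w \<noteq> complex_of_real \<phi>" using assms by auto
    then show ?thesis by simp
  qed
  have "(cmod (w - complex_of_real \<phi>))\<^sup>2 \<le> (1 + \<phi>)\<^sup>2"
    using le pos by (intro power_mono) auto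
  have p: "1 + \<phi> > 0" using assms by auto
  have "(1 - \<phi>\<^sup>2) / (2 * pi * (1 + \<phi>)\<^sup>2) = ((1 - \<phi>) * (1 + \<phi>)) / ((2 * pi * (1 + \<phi>)) * (1 + \<phi>))"
    by (simp add: power2_eq_square algebra_simps)
  also have "\<dots> = (1 - \<phi>) / (2 * pi * (1 + \<phi>))"
    using p by (subst mult_divide_mult_cancel_right) auto
  finally have "(1 / (2 * pi)) * ((1 - \<phi>) / (1 + \<phi>)) = (1 - \<phi>\<^sup>2) / (2 * pi * (1 + \<phi>)\<^sup>2)"
    by simp
  also have "\<dots> \<le> (1 - \<phi>\<^sup>2) / (2 * pi * (cmod (w - complex_of_real \<phi>))\<^sup>2)"
    using assms pos \<open>(cmod (w - complex_of_real \<phi>))\<^sup>2 \<le> (1 + \<phi>)\<^sup>2\<close>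
    by (intro divide_left_mono mult_left_mono mult_pos_pos) (auto simp: abs_square_le_1)
  finally show ?thesis by (simp add: wc_density_def)
qed

lemma wc_sets[simp, measurable_cong]: "sets (wrapped_cauchy \<phi>) = sets borel"
  by (simp add: wrapped_cauchy_def)

lemma tk_sets[simp, measurable_cong]: "sets (trans_kernel \<beta> \<phi> x) = sets borel"
  by (simp add: trans_kernel_def)

lemma cnj_measurable[measurable]: "cnj \<in> borel_measurable borel"
  by (intro borel_measurable_continuous_onI continuous_intros)

locale wcsetup =
  fixes \<beta> \<phi> :: real
  assumes beta: "-1 < \<beta>" "\<beta> < 1" and phi: "0 \<le> \<phi>" "\<phi> < 1"
    and wcprob: "emeasure (wrapped_cauchy \<phi>) UNIV = 1"
begin

definition kap :: real where "kap = (1 / (2 * pi)) * ((1 - \<phi>) / (1 + \<phi>))"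
definition cc :: real where "cc = (1 - \<phi>) / (1 + \<phi>)"
definition kd :: "complex \<Rightarrow> complex \<Rightarrow> ennreal" where
  "kd x z = ennreal (wc_density \<phi> (z * cnj (mob \<beta> x)))"
definition rr :: "complex \<Rightarrow> complex \<Rightarrow> ennreal" where
  "rr x z = kd x z - ennreal kap"

lemma kap_pos: "0 < kap" using phi by (simp add: kap_def)
lemma cc_pos: "0 < cc" using phi by (simp add: cc_def)
lemma cc_le1: "cc \<le> 1" using phi by (simp add: cc_def)
lemma kap_cc: "kap * (2 * pi) = cc" by (simp add: kap_def cc_def)

lemma kd_meas[measurable]: "(\<lambda>p. kd (fst p) (snd p)) \<in> borel_measurable (borel \<Otimes>\<^sub>M borel)"
  unfolding kd_def by measurable

lemma rr_meas[measurable]: "(\<lambda>p. rr (fst p) (snd p)) \<in> borel_measurable (borel \<Otimes>\<^sub>M borel)"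
  unfolding rr_def by measurable

lemma kd_meas2[measurable]: "kd x \<in> borel_measurable borel"
  unfolding kd_def by measurable

lemma rr_meas2[measurable]: "rr x \<in> borel_measurable borel"
  unfolding rr_def by measurable

lemma mob_S: "x \<in> sphere 0 1 \<Longrightarrow> cmod (mob \<beta> x) = 1"
  using mob_unit[OF beta] by simp

lemma f_int: "(\<integral>\<^sup>+ z. ennreal (wc_density \<phi> z) \<partial>arc_measure) = 1"
  using wcprob unfolding wrapped_cauchy_def
  by (subst (asm) emeasure_density) auto

lemma kd_int:
  assumes "cmod (mob \<beta> x) = 1"
  shows "(\<integral>\<^sup>+ z. kd x z \<partial>arc_measure) = 1"
proof -
  have "(\<integral>\<^sup>+ z. kd x z \<partial>arc_measure) = (\<integral>\<^sup>+ z. ennreal (wc_density \<phi> (cnj (mob \<beta> x) * z)) \<partial>arc_measure)"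
    by (simp add: kd_def mult.commute)
  also have "\<dots> = (\<integral>\<^sup>+ z. ennreal (wc_density \<phi> z) \<partial>arc_measure)"
    using assms by (intro arc_rotate) auto
  finally show ?thesis using f_int by simp
qed

lemma kd_lower:
  assumes "cmod (mob \<beta> x) = 1" "cmod z = 1"
  shows "ennreal kap \<le> kd x z"
  unfolding kd_def kap_def
  using assms phi by (intro ennreal_leI wc_lower) (auto simp: norm_mult)

lemma kernel_density:
  assumes m: "cmod (mob \<beta> x) = 1" and A[measurable]: "A \<in> sets borel"
  shows "emeasure (trans_kernel \<beta> \<phi> x) A = (\<integral>\<^sup>+ z. kd x z * indicator A z \<partial>arc_measure)"
proof -
  define m where "m = mob \<beta> x"
  have mm: "m * cnj m = 1"
    using m unfolding m_def by (metis complex_norm_square mult.commute of_real_1 power_one)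
  have "(\<lambda>e. m * e) \<in> borel_measurable borel" by measurable
  from measurable_sets[OF this A] have [measurable]: "(\<lambda>e. m * e) -` A \<in> sets borel" by simp
  have "emeasure (trans_kernel \<beta> \<phi> x) A = emeasure (wrapped_cauchy \<phi>) ((\<lambda>e. m * e) -` A)"
    unfolding trans_kernel_def m_def
    by (subst emeasure_distr) (auto simp: wrapped_cauchy_def arc_measure_def)
  also have "\<dots> = (\<integral>\<^sup>+ e. ennreal (wc_density \<phi> e) * indicator ((\<lambda>e. m * e) -` A) e \<partial>arc_measure)"
    unfolding wrapped_cauchy_def by (subst emeasure_density) auto
  also have "\<dots> = (\<integral>\<^sup>+ e. (\<lambda>y. ennreal (wc_density \<phi> (y * cnj m)) * indicator A y) (m * e) \<partial>arc_measure)"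
  proof (intro nn_integral_cong)
    fix e :: complex
    have h: "m * e * cnj m = e" using mm by (simp add: algebra_simps)
    show "ennreal (wc_density \<phi> e) * indicator ((\<lambda>e. m * e) -` A) e =
      ennreal (wc_density \<phi> (m * e * cnj m)) * indicator A (m * e)"
      unfolding h by (simp split: split_indicator)
  qed
  also have "\<dots> = (\<integral>\<^sup>+ y. ennreal (wc_density \<phi> (y * cnj m)) * indicator A y \<partial>arc_measure)"
    using m unfolding m_def by (intro arc_rotate) auto
  finally show ?thesis by (simp add: kd_def m_def)
qed

lemma kd_split:
  assumes "cmod (mob \<beta> x) = 1" "cmod z = 1"
  shows "kd x z = ennreal kap + rr x z"
  unfolding rr_def by (rule sym, rule add_diff_inverse_ennreal[OF kd_lower[OF assms]])

lemma rr_int: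
  assumes m: "cmod (mob \<beta> x) = 1"
  shows "(\<integral>\<^sup>+ z. rr x z \<partial>arc_measure) = ennreal (1 - cc)"
proof -
  have "1 = (\<integral>\<^sup>+ z. kd x z \<partial>arc_measure)" using kd_int[OF m] by simp
  also have "\<dots> = (\<integral>\<^sup>+ z. ennreal kap + rr x z \<partial>arc_measure)"
  proof (rule nn_integral_cong_AE)
    show "AE z in arc_measure. kd x z = ennreal kap + rr x z"
      using AE_arc_sphere by eventually_elim (simp add: kd_split[OF m])
  qed
  also have "\<dots> = ennreal kap * (2 * pi) + (\<integral>\<^sup>+ z. rr x z \<partial>arc_measure)"
    by (subst nn_integral_add) (simp_all add: arc_UNIV)
  also have "ennreal kap * (2 * pi) = ennreal cc"
    using kap_pos by (simp add: ennreal_mult[symmetric] kap_cc)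
  finally have e: "1 = ennreal cc + (\<integral>\<^sup>+ z. rr x z \<partial>arc_measure)" .
  have "(\<integral>\<^sup>+ z. rr x z \<partial>arc_measure) = (ennreal cc + (\<integral>\<^sup>+ z. rr x z \<partial>arc_measure)) - ennreal cc"
    by (rule ennreal_add_diff_cancel_left[symmetric]) simp
  then have "(\<integral>\<^sup>+ z. rr x z \<partial>arc_measure) = 1 - ennreal cc"
    by (simp only: e[symmetric])
  also have "1 - ennreal cc = ennreal 1 - ennreal cc" by simp
  also have "\<dots> = ennreal (1 - cc)" using cc_pos by (intro ennreal_minus) simp
  finally show ?thesis .
qed

end

context wcsetup begin

lemma kd_raw[measurable (raw)]:
  "f \<in> measurable M borel \<Longrightarrow> g \<in> measurable M borel \<Longrightarrow> (\<lambda>x. kd (f x) (g x)) \<in> borel_measurable M"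
  by (rule measurable_compose[OF measurable_Pair kd_meas, simplified])

lemma rr_raw[measurable (raw)]:
  "f \<in> measurable M borel \<Longrightarrow> g \<in> measurable M borel \<Longrightarrow> (\<lambda>x. rr (f x) (g x)) \<in> borel_measurable M"
  by (rule measurable_compose[OF measurable_Pair rr_meas, simplified])

interpretation arc: finite_measure arc_measure by simp

lemma arc_pair: "pair_sigma_finite arc_measure arc_measure"
  by (simp add: pair_sigma_finite_def arc.sigma_finite_measure_axioms)

definition T :: "(complex \<Rightarrow> ennreal) \<Rightarrow> complex \<Rightarrow> ennreal" where
  "T h z = (\<integral>\<^sup>+ x. h x * rr x z \<partial>arc_measure)"

definition g0 :: "complex \<Rightarrow> ennreal" where "g0 z = ennreal (1 / (2 * pi))"
definition gj :: "nat \<Rightarrow> complex \<Rightarrow> ennreal" where "gj j = (T ^^ j) g0"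
definition gfix :: "complex \<Rightarrow> ennreal" where "gfix z = ennreal cc * (\<Sum>j. gj j z)"

lemma T_meas[measurable]:
  assumes [measurable]: "h \<in> borel_measurable borel"
  shows "T h \<in> borel_measurable borel"
proof -
  have "(\<lambda>(z, x). h x * rr x z) \<in> borel_measurable (borel \<Otimes>\<^sub>M arc_measure)" by measurable
  then show ?thesis unfolding T_def
    by (rule arc.borel_measurable_nn_integral)
qed

lemma T_mono:
  assumes "\<And>x. x \<in> sphere 0 1 \<Longrightarrow> a x \<le> b x"
  shows "T a z \<le> T b z"
  unfolding T_def
proof (rule nn_integral_mono_AE)
  show "AE x in arc_measure. a x * rr x z \<le> b x * rr x z"
    using AE_arc_sphere
  proof eventually_elim
    case (elim x)
    then show ?case using assms[of x] by (intro mult_right_mono) auto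
  qed
qed

lemma T_cmult:
  assumes [measurable]: "a \<in> borel_measurable borel"
  shows "T (\<lambda>x. C * a x) z = C * T a z"
  unfolding T_def mult.assoc by (rule nn_integral_cmult) measurable

lemma T_sum:
  assumes [measurable]: "\<And>j. a j \<in> borel_measurable borel"
  shows "T (\<lambda>x. \<Sum>j\<in>J. a j x) z = (\<Sum>j\<in>J. T (a j) z)"
  unfolding T_def sum_distrib_right by (rule nn_integral_sum) measurable

lemma T_suminf:
  assumes [measurable]: "\<And>j. a j \<in> borel_measurable borel"
  shows "T (\<lambda>x. \<Sum>j. a j x) z = (\<Sum>j. T (a j) z)"
proof -
  have e: "(\<Sum>j. a j x) * rr x z = (\<Sum>j. a j x * rr x z)" for x
    using ennreal_suminf_cmult[of "rr x z" "\<lambda>j. a j x"] by (simp add: mult.commute)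
  show ?thesis unfolding T_def e by (rule nn_integral_suminf) measurable
qed

lemma T_int:
  assumes [measurable]: "h \<in> borel_measurable borel"
  shows "(\<integral>\<^sup>+ z. T h z \<partial>arc_measure) = ennreal (1 - cc) * (\<integral>\<^sup>+ x. h x \<partial>arc_measure)"
proof -
  have "(\<integral>\<^sup>+ z. T h z \<partial>arc_measure) = (\<integral>\<^sup>+ x. \<integral>\<^sup>+ z. h x * rr x z \<partial>arc_measure \<partial>arc_measure)"
    unfolding T_def by (rule pair_sigma_finite.Fubini'[OF arc_pair]) measurable
  also have "\<dots> = (\<integral>\<^sup>+ x. h x * ennreal (1 - cc) \<partial>arc_measure)"
  proof (rule nn_integral_cong_AE)
    show "AE x in arc_measure. (\<integral>\<^sup>+ z. h x * rr x z \<partial>arc_measure) = h x * ennreal (1 - cc)"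
      using AE_arc_sphere
    proof eventually_elim
      case (elim x)
      then show ?case by (simp add: nn_integral_cmult rr_int mob_S)
    qed
  qed
  also have "\<dots> = ennreal (1 - cc) * (\<integral>\<^sup>+ x. h x \<partial>arc_measure)"
    by (subst nn_integral_cmult[symmetric]) (auto simp: mult.commute)
  finally show ?thesis .
qed

lemma gj_Suc: "gj (Suc j) = T (gj j)"
  by (simp add: gj_def)

lemma gj_0: "gj 0 = g0"
  by (simp add: gj_def)

lemma gj_meas[measurable]: "gj j \<in> borel_measurable borel"
  by (induction j) (simp_all add: gj_0 g0_def gj_Suc)

lemma gj_int: "(\<integral>\<^sup>+ z. gj j z \<partial>arc_measure) = ennreal ((1 - cc) ^ j)"
proof (induction j)
  case 0
  then show ?case by (simp add: gj_0 g0_def arc_UNIV ennreal_mult[symmetric])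
next
  case (Suc j)
  then show ?case using cc_le1
    by (simp add: gj_Suc T_int ennreal_mult[symmetric])
qed

lemma gfix_meas[measurable]: "gfix \<in> borel_measurable borel"
  unfolding gfix_def by measurable

lemma geom_ennreal: "(\<Sum>j. ennreal ((1 - cc) ^ j)) = ennreal (1 / cc)"
proof -
  have "norm (1 - cc) < 1" using cc_pos cc_le1 by auto
  then have "summable (\<lambda>j. (1 - cc) ^ j)" by (rule summable_geometric)
  then have "(\<Sum>j. ennreal ((1 - cc) ^ j)) = ennreal (\<Sum>j. (1 - cc) ^ j)"
    using cc_le1 by (intro suminf_ennreal2) auto
  also have "(\<Sum>j. (1 - cc) ^ j) = 1 / cc"
    using \<open>norm (1 - cc) < 1\<close> by (subst suminf_geometric) auto
  finally show ?thesis .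
qed

lemma gfix_int: "(\<integral>\<^sup>+ z. gfix z \<partial>arc_measure) = 1"
proof -
  have "(\<integral>\<^sup>+ z. gfix z \<partial>arc_measure) = ennreal cc * (\<integral>\<^sup>+ z. (\<Sum>j. gj j z) \<partial>arc_measure)"
    unfolding gfix_def by (rule nn_integral_cmult) measurable
  also have "(\<integral>\<^sup>+ z. (\<Sum>j. gj j z) \<partial>arc_measure) = (\<Sum>j. ennreal ((1 - cc) ^ j))"
    by (subst nn_integral_suminf) (auto simp: gj_int)
  also have "\<dots> = ennreal (1 / cc)" by (rule geom_ennreal)
  also have "ennreal cc * ennreal (1 / cc) = 1"
    using cc_pos by (simp add: ennreal_mult[symmetric])
  finally show ?thesis .
qed

lemma g0_kap: "ennreal cc * g0 z = ennreal kap"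
  using cc_pos by (simp add: g0_def ennreal_mult[symmetric] kap_cc[symmetric])

lemma fix_step:
  assumes g[measurable]: "g \<in> borel_measurable borel" and z: "z \<in> sphere 0 1"
  shows "(\<integral>\<^sup>+ x. g x * kd x z \<partial>arc_measure) = ennreal kap * (\<integral>\<^sup>+ x. g x \<partial>arc_measure) + T g z"
proof -
  have "(\<integral>\<^sup>+ x. g x * kd x z \<partial>arc_measure) = (\<integral>\<^sup>+ x. ennreal kap * g x + g x * rr x z \<partial>arc_measure)"
  proof (rule nn_integral_cong_AE)
    show "AE x in arc_measure. g x * kd x z = ennreal kap * g x + g x * rr x z"
      using AE_arc_sphere
    proof eventually_elim
      case (elim x)
      then show ?case using z by (simp add: kd_split mob_S distrib_left mult.commute)
    qed
  qed
  also have "\<dots> = ennreal kap * (\<integral>\<^sup>+ x. g x \<partial>arc_measure) + T g z"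
    unfolding T_def by (subst nn_integral_add) (auto simp: nn_integral_cmult)
  finally show ?thesis .
qed

lemma gfix_fix:
  assumes z: "z \<in> sphere 0 1"
  shows "(\<integral>\<^sup>+ x. gfix x * kd x z \<partial>arc_measure) = gfix z"
proof -
  have "T gfix z = ennreal cc * T (\<lambda>x. \<Sum>j. gj j x) z"
    unfolding gfix_def by (rule T_cmult) measurable
  also have "T (\<lambda>x. \<Sum>j. gj j x) z = (\<Sum>j. gj (Suc j) z)"
    by (subst T_suminf) (auto simp: gj_Suc)
  finally have 1: "T gfix z = ennreal cc * (\<Sum>j. gj (Suc j) z)" .
  have 2: "(\<Sum>j. gj j z) = (\<Sum>j. gj (j + 1) z) + (\<Sum>j<1. gj j z)"
    by (rule suminf_offset) simp
  have "(\<integral>\<^sup>+ x. gfix x * kd x z \<partial>arc_measure) = ennreal kap + T gfix z"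
    using fix_step[OF gfix_meas z] by (simp add: gfix_int)
  also have "\<dots> = gfix z"
    unfolding 1 gfix_def 2 using g0_kap[of z]
    by (simp add: gj_0 distrib_left add.commute)
  finally show ?thesis .
qed

end

lemma sphere_borel[measurable]: "sphere (0::complex) 1 \<in> sets borel"
  by (simp add: borel_closed)

context wcsetup begin

interpretation arc: finite_measure arc_measure by simp

lemma inner_meas[measurable]:
  assumes [measurable]: "A \<in> sets borel"
  shows "(\<lambda>x. \<integral>\<^sup>+ z. kd x z * indicator A z \<partial>arc_measure) \<in> borel_measurable borel"
proof -
  have "(\<lambda>(x, z). kd x z * indicator A z) \<in> borel_measurable (borel \<Otimes>\<^sub>M arc_measure)" by measurable
  then show ?thesis by (rule arc.borel_measurable_nn_integral)
qed

lemma kernel_AE: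
  assumes [measurable]: "A \<in> sets borel" and ae: "AE x in M. x \<in> sphere 0 1"
  shows "(\<integral>\<^sup>+ x. emeasure (trans_kernel \<beta> \<phi> x) A \<partial>M) = (\<integral>\<^sup>+ x. (\<integral>\<^sup>+ z. kd x z * indicator A z \<partial>arc_measure) \<partial>M)"
proof (rule nn_integral_cong_AE)
  show "AE x in M. emeasure (trans_kernel \<beta> \<phi> x) A = (\<integral>\<^sup>+ z. kd x z * indicator A z \<partial>arc_measure)"
    using ae
  proof eventually_elim
    case (elim x)
    then show ?case by (intro kernel_density mob_S) auto
  qed
qed

lemma mu_invariant: "invariant_distr \<beta> \<phi> (density arc_measure gfix)"
proof -
  let ?mu = "density arc_measure gfix"
  have tot: "emeasure ?mu UNIV = 1"
    by (subst emeasure_density) (auto simp: gfix_int)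
  have ps: "prob_space ?mu"
    by (rule prob_spaceI) (simp add: tot)
  have "emeasure ?mu (sphere 0 1) = (\<integral>\<^sup>+ z. gfix z * indicator (sphere 0 1) z \<partial>arc_measure)"
    by (subst emeasure_density) auto
  also have "\<dots> = (\<integral>\<^sup>+ z. gfix z \<partial>arc_measure)"
  proof (rule nn_integral_cong_AE)
    show "AE z in arc_measure. gfix z * indicator (sphere 0 1) z = gfix z"
      using AE_arc_sphere by eventually_elim simp
  qed
  also have "\<dots> = 1" by (rule gfix_int)
  finally have S1: "emeasure ?mu (sphere 0 1) = 1" .
  have aemu: "AE x in ?mu. x \<in> sphere 0 1"
    by (subst AE_density) (auto intro: AE_mp[OF AE_arc_sphere])
  have inv: "emeasure ?mu A = (\<integral>\<^sup>+ x. emeasure (trans_kernel \<beta> \<phi> x) A \<partial>?mu)"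
    if A[measurable]: "A \<in> sets borel" for A
  proof -
    have "(\<integral>\<^sup>+ x. emeasure (trans_kernel \<beta> \<phi> x) A \<partial>?mu)
        = (\<integral>\<^sup>+ x. (\<integral>\<^sup>+ z. kd x z * indicator A z \<partial>arc_measure) \<partial>?mu)"
      by (rule kernel_AE[OF A aemu])
    also have "\<dots> = (\<integral>\<^sup>+ x. gfix x * (\<integral>\<^sup>+ z. kd x z * indicator A z \<partial>arc_measure) \<partial>arc_measure)"
      by (rule nn_integral_density) measurable
    also have "\<dots> = (\<integral>\<^sup>+ x. (\<integral>\<^sup>+ z. gfix x * (kd x z * indicator A z) \<partial>arc_measure) \<partial>arc_measure)"
      by (intro nn_integral_cong nn_integral_cmult[symmetric]) measurable
    also have "\<dots> = (\<integral>\<^sup>+ z. (\<integral>\<^sup>+ x. gfix x * (kd x z * indicator A z) \<partial>arc_measure) \<partial>arc_measure)"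
      by (rule pair_sigma_finite.Fubini'[OF arc_pair, symmetric]) measurable
    also have "\<dots> = (\<integral>\<^sup>+ z. (\<integral>\<^sup>+ x. gfix x * kd x z \<partial>arc_measure) * indicator A z \<partial>arc_measure)"
      by (intro nn_integral_cong) (simp add: nn_integral_multc[symmetric] mult.assoc)
    also have "\<dots> = (\<integral>\<^sup>+ z. gfix z * indicator A z \<partial>arc_measure)"
    proof (rule nn_integral_cong_AE)
      show "AE z in arc_measure. (\<integral>\<^sup>+ x. gfix x * kd x z \<partial>arc_measure) * indicator A z = gfix z * indicator A z"
        using AE_arc_sphere by eventually_elim (simp add: gfix_fix)
    qed
    also have "\<dots> = emeasure ?mu A"
      by (subst emeasure_density) auto
    finally show ?thesis ..
  qed
  show ?thesis unfolding invariant_distr_def using ps S1 inv by simp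
qed

end

context wcsetup begin

lemma g_low:
  assumes gm[measurable]: "g \<in> borel_measurable borel"
    and fx: "\<And>z. z \<in> sphere 0 1 \<Longrightarrow> g z = ennreal kap + T g z"
    and z: "z \<in> sphere 0 1"
  shows "gfix z \<le> g z"
proof -
  have low: "\<forall>z\<in>sphere 0 1. ennreal cc * (\<Sum>j<N. gj j z) \<le> g z" for N
  proof (induction N)
    case 0
    then show ?case by simp
  next
    case (Suc N)
    show ?case
    proof
      fix z :: complex assume z: "z \<in> sphere 0 1"
      have "ennreal cc * (\<Sum>j<Suc N. gj j z) = ennreal cc * gj 0 z + ennreal cc * (\<Sum>j<N. gj (Suc j) z)"
        by (simp only: sum.lessThan_Suc_shift distrib_left)
      also have "ennreal cc * gj 0 z = ennreal kap" by (simp add: gj_0 g0_kap)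
      also have "ennreal cc * (\<Sum>j<N. gj (Suc j) z) = T (\<lambda>x. ennreal cc * (\<Sum>j<N. gj j x)) z"
        by (subst T_cmult) (auto simp: T_sum gj_Suc)
      also have "\<dots> \<le> T g z" using Suc.IH by (intro T_mono) auto
      finally show "ennreal cc * (\<Sum>j<Suc N. gj j z) \<le> g z"
        using fx[OF z] by (simp add: add_left_mono)
    qed
  qed
  have "gfix z = (\<Sum>j. ennreal cc * gj j z)"
    by (simp add: gfix_def)
  also have "\<dots> = (SUP N. \<Sum>j<N. ennreal cc * gj j z)" by (rule suminf_eq_SUP)
  also have "\<dots> \<le> g z"
    using low z by (intro SUP_least) (simp add: sum_distrib_left[symmetric])
  finally show ?thesis .
qed

lemma unique_inv:
  assumes inv: "invariant_distr \<beta> \<phi> \<mu>'"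
  shows "\<mu>' = density arc_measure gfix"
proof -
  have ps: "prob_space \<mu>'" and sets_eq[measurable_cong]: "sets \<mu>' = sets borel"
    and S1: "emeasure \<mu>' (sphere 0 1) = 1"
    and inv': "\<And>A. A \<in> sets borel \<Longrightarrow> emeasure \<mu>' A = (\<integral>\<^sup>+ x. emeasure (trans_kernel \<beta> \<phi> x) A \<partial>\<mu>')"
    using inv unfolding invariant_distr_def by auto
  interpret P: prob_space \<mu>' by (rule ps)
  have sp: "space \<mu>' = UNIV" using sets_eq_imp_space_eq[OF sets_eq] by simp
  have "emeasure \<mu>' (space \<mu>' - sphere 0 1) = emeasure \<mu>' (space \<mu>') - emeasure \<mu>' (sphere 0 1)"
    by (rule emeasure_compl) (auto simp: S1)
  then have "emeasure \<mu>' (UNIV - sphere 0 1) = 0" using S1 P.emeasure_space_1 sp by simp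
  then have ae: "AE x in \<mu>'. x \<in> sphere 0 1"
    by (intro AE_I'[of "UNIV - sphere 0 1"]) (auto simp: sp)
  define g' where "g' z = (\<integral>\<^sup>+ x. kd x z \<partial>\<mu>')" for z
  have g'm[measurable]: "g' \<in> borel_measurable borel"
  proof -
    have "(\<lambda>(z, x). kd x z) \<in> borel_measurable (borel \<Otimes>\<^sub>M \<mu>')" by measurable
    then show ?thesis unfolding g'_def by (rule P.borel_measurable_nn_integral)
  qed
  have pair: "pair_sigma_finite \<mu>' arc_measure"
    by (simp add: pair_sigma_finite_def P.sigma_finite_measure_axioms finite_measure.sigma_finite_measure)
  have dens: "\<mu>' = density arc_measure g'"
  proof (rule measure_eqI)
    show "sets \<mu>' = sets (density arc_measure g')" by (simp add: sets_eq)
    fix A assume "A \<in> sets \<mu>'"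
    then have A[measurable]: "A \<in> sets borel" by (simp add: sets_eq)
    have "emeasure \<mu>' A = (\<integral>\<^sup>+ x. (\<integral>\<^sup>+ z. kd x z * indicator A z \<partial>arc_measure) \<partial>\<mu>')"
      using inv'[OF A] kernel_AE[OF A ae] by simp
    also have "\<dots> = (\<integral>\<^sup>+ z. (\<integral>\<^sup>+ x. kd x z * indicator A z \<partial>\<mu>') \<partial>arc_measure)"
      by (rule pair_sigma_finite.Fubini'[OF pair, symmetric]) measurable
    also have "\<dots> = (\<integral>\<^sup>+ z. g' z * indicator A z \<partial>arc_measure)"
      unfolding g'_def by (intro nn_integral_cong) (simp add: nn_integral_multc)
    also have "\<dots> = emeasure (density arc_measure g') A"
      by (subst emeasure_density) auto
    finally show "emeasure \<mu>' A = emeasure (density arc_measure g') A" .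
  qed
  have intg': "(\<integral>\<^sup>+ z. g' z \<partial>arc_measure) = 1"
  proof -
    have "(\<integral>\<^sup>+ z. g' z \<partial>arc_measure) = emeasure (density arc_measure g') UNIV"
      by (subst emeasure_density) auto
    also have "\<dots> = 1" using P.emeasure_space_1 sp dens by simp
    finally show ?thesis .
  qed
  have fixg': "g' z = ennreal kap + T g' z" if z: "z \<in> sphere 0 1" for z
  proof -
    have "g' z = (\<integral>\<^sup>+ x. kd x z \<partial>\<mu>')" by (simp only: g'_def)
    also have "\<dots> = (\<integral>\<^sup>+ x. kd x z \<partial>density arc_measure g')"
      by (subst dens) (rule refl)
    also have "\<dots> = (\<integral>\<^sup>+ x. g' x * kd x z \<partial>arc_measure)"
      by (rule nn_integral_density) measurable
    also have "\<dots> = ennreal kap + T g' z"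
      using fix_step[OF g'm z] intg' by simp
    finally show ?thesis .
  qed
  let ?mu = "density arc_measure gfix"
  have psmu: "prob_space ?mu" using mu_invariant unfolding invariant_distr_def by auto
  interpret Q: prob_space ?mu by (rule psmu)
  have le: "emeasure ?mu A \<le> emeasure \<mu>' A" if A[measurable]: "A \<in> sets borel" for A
  proof -
    have "emeasure ?mu A = (\<integral>\<^sup>+ z. gfix z * indicator A z \<partial>arc_measure)"
      by (subst emeasure_density) auto
    also have "\<dots> \<le> (\<integral>\<^sup>+ z. g' z * indicator A z \<partial>arc_measure)"
    proof (rule nn_integral_mono_AE)
      show "AE z in arc_measure. gfix z * indicator A z \<le> g' z * indicator A z"
        using AE_arc_sphere
      proof eventually_elim
        case (elim z)
        then show ?case using g_low[OF g'm fixg' elim] by (intro mult_right_mono) auto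
      qed
    qed
    also have "\<dots> = emeasure (density arc_measure g') A"
      by (subst emeasure_density) auto
    finally show ?thesis using dens by simp
  qed
  have spmu: "space ?mu = UNIV" by simp
  have eqm: "measure ?mu A = measure \<mu>' A" if A[measurable]: "A \<in> sets borel" for A
  proof -
    have l1: "measure ?mu A \<le> measure \<mu>' A"
      using le[OF A] by (simp add: Q.emeasure_eq_measure P.emeasure_eq_measure)
    have Ac[measurable]: "UNIV - A \<in> sets borel" by auto
    have l2: "measure ?mu (UNIV - A) \<le> measure \<mu>' (UNIV - A)"
      using le[OF Ac] by (simp add: Q.emeasure_eq_measure P.emeasure_eq_measure)
    have c1: "measure ?mu (UNIV - A) = 1 - measure ?mu A"
      using Q.prob_compl[of A] by simp
    have c2: "measure \<mu>' (UNIV - A) = 1 - measure \<mu>' A"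
      using P.prob_compl[of A] sp by simp
    show ?thesis using l1 l2 c1 c2 by linarith
  qed
  show ?thesis
  proof (rule measure_eqI)
    show "sets \<mu>' = sets ?mu" by (simp add: sets_eq)
    fix A assume "A \<in> sets \<mu>'"
    then have A: "A \<in> sets borel" by (simp add: sets_eq)
    show "emeasure \<mu>' A = emeasure ?mu A"
      using eqm[OF A] by (simp add: Q.emeasure_eq_measure P.emeasure_eq_measure)
  qed
qed

end

fun chainZ :: "real \<Rightarrow> nat \<Rightarrow> (nat \<Rightarrow> complex) \<Rightarrow> complex" where
  "chainZ b 0 f = f 0"
| "chainZ b (Suc n) f = mob b (chainZ b n f) * f (Suc n)"

lemma chainZ_restrict: "n \<le> N \<Longrightarrow> chainZ b n (restrict f {0..N}) = chainZ b n f"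
  by (induction n) auto

lemma chainZ_meas: "n \<le> N \<Longrightarrow> chainZ b n \<in> borel_measurable (PiM {0..N} (\<lambda>_. borel))"
proof (induction n)
  case 0
  then show ?case by (simp add: measurable_component_singleton)
next
  case (Suc n)
  then have [measurable]: "chainZ b n \<in> borel_measurable (PiM {0..N} (\<lambda>_. borel))" by simp
  have [measurable]: "(\<lambda>f. f (Suc n)) \<in> borel_measurable (PiM {0..N} (\<lambda>_. borel))"
    using Suc by (intro measurable_component_singleton) auto
  show ?case by simp
qed

lemma chain_eq: "chain b X0 eps n \<omega> = chainZ b n (\<lambda>i. if i = 0 then X0 \<omega> else eps i \<omega>)"
  by (induction n) auto

locale chainsetup = wcsetup \<beta> \<phi> for \<beta> \<phi> +
  fixes M :: "'a measure" and X0 :: "'a \<Rightarrow> complex" and eps :: "nat \<Rightarrow> 'a \<Rightarrow> complex"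
  assumes M: "prob_space M" and X0_circ: "\<forall>\<omega>\<in>space M. X0 \<omega> \<in> sphere 0 1"
    and indep: "prob_space.indep_vars M (\<lambda>_. borel) (\<lambda>i. if i = 0 then X0 else eps i) UNIV"
    and eps_distr: "\<forall>i\<ge>1. distr M borel (eps i) = wrapped_cauchy \<phi>"
begin

interpretation P: prob_space M by (rule M)

definition Z :: "nat \<Rightarrow> 'a \<Rightarrow> complex" where "Z i = (if i = 0 then X0 else eps i)"

lemma Z_meas[measurable]: "Z i \<in> borel_measurable M"
  using indep unfolding P.indep_vars_def Z_def by auto

lemma X0_meas[measurable]: "X0 \<in> borel_measurable M"
  using Z_meas[of 0] by (simp add: Z_def)

lemma eps_meas[measurable]: "i \<ge> 1 \<Longrightarrow> eps i \<in> borel_measurable M"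
  using Z_meas[of i] by (simp add: Z_def)

lemma chain_meas[measurable]: "chain \<beta> X0 eps n \<in> borel_measurable M"
proof (induction n)
  case 0
  then show ?case by simp
next
  case (Suc n)
  then have [measurable]: "chain \<beta> X0 eps n \<in> borel_measurable M" .
  have [measurable]: "eps (Suc n) \<in> borel_measurable M" by (rule eps_meas) simp
  show ?case by simp
qed

lemma eps_S: "i \<ge> 1 \<Longrightarrow> AE \<omega> in M. eps i \<omega> \<in> sphere 0 1"
proof -
  assume i: "i \<ge> 1"
  have "emeasure M {\<omega> \<in> space M. eps i \<omega> \<notin> sphere 0 1} = emeasure (distr M borel (eps i)) (- sphere 0 1)"
    using i by (subst emeasure_distr) (auto simp: vimage_def Collect_conj_eq Int_commute)
  also have "\<dots> = emeasure (wrapped_cauchy \<phi>) (- sphere 0 1)" using eps_distr i by simp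
  also have "\<dots> = (\<integral>\<^sup>+ z. ennreal (wc_density \<phi> z) * indicator (- sphere 0 1) z \<partial>arc_measure)"
    unfolding wrapped_cauchy_def by (subst emeasure_density) auto
  also have "\<dots> = (\<integral>\<^sup>+ z. 0 \<partial>arc_measure)"
  proof (rule nn_integral_cong_AE)
    show "AE z in arc_measure. ennreal (wc_density \<phi> z) * indicator (- sphere 0 1) z = 0"
      using AE_arc_sphere by eventually_elim simp
  qed
  finally have "emeasure M {\<omega> \<in> space M. eps i \<omega> \<notin> sphere 0 1} = 0" by simp
  then show ?thesis
    using i by (intro AE_I[OF order_refl]) auto
qed

lemma chain_S: "AE \<omega> in M. \<forall>n. chain \<beta> X0 eps n \<omega> \<in> sphere 0 1"
proof -
  have "AE \<omega> in M. \<forall>i. eps (Suc i) \<omega> \<in> sphere 0 1"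
    by (subst AE_all_countable, intro allI eps_S) simp
  from this AE_space show ?thesis
  proof eventually_elim
    case (elim \<omega>)
    show ?case
    proof
      fix n show "chain \<beta> X0 eps n \<omega> \<in> sphere 0 1"
      proof (induction n)
        case 0
        then show ?case using X0_circ elim(2) by auto
      next
        case (Suc n)
        then show ?case using elim(1)[rule_format, of n] mob_S[of "chain \<beta> X0 eps n \<omega>"]
          by (simp add: norm_mult)
      qed
    qed
  qed
qed

end

context wcsetup begin

lemma kernel_miss:
  assumes J[measurable]: "J \<in> sets borel" and JS: "J \<subseteq> sphere 0 1"
    and Jh: "ennreal h \<le> emeasure arc_measure J" and h: "0 \<le> h"
    and x: "x \<in> sphere 0 1"
  shows "emeasure (wrapped_cauchy \<phi>) ((\<lambda>w. mob \<beta> x * w) -` (- J)) \<le> ennreal (1 - kap * h)"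
proof -
  have m: "cmod (mob \<beta> x) = 1" using x by (rule mob_S)
  have mm[measurable]: "(\<lambda>w. mob \<beta> x * w) \<in> borel_measurable borel" by measurable
  have e1: "emeasure (wrapped_cauchy \<phi>) ((\<lambda>w. mob \<beta> x * w) -` (- J)) = emeasure (trans_kernel \<beta> \<phi> x) (- J)"
    unfolding trans_kernel_def by (subst emeasure_distr) (auto simp: wrapped_cauchy_def arc_measure_def)
  have tot: "emeasure (trans_kernel \<beta> \<phi> x) UNIV = 1"
    unfolding trans_kernel_def using wcprob
    by (subst emeasure_distr) (auto simp: wrapped_cauchy_def arc_measure_def)
  have sp: "space (trans_kernel \<beta> \<phi> x) = UNIV" by (simp add: trans_kernel_def)
  have "emeasure (trans_kernel \<beta> \<phi> x) (- J) = emeasure (trans_kernel \<beta> \<phi> x) (space (trans_kernel \<beta> \<phi> x) - J)"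
    by (simp add: sp Compl_eq_Diff_UNIV)
  also have "\<dots> = 1 - emeasure (trans_kernel \<beta> \<phi> x) J"
  proof (subst emeasure_compl)
    show "J \<in> sets (trans_kernel \<beta> \<phi> x)" by simp
    show "emeasure (trans_kernel \<beta> \<phi> x) J \<noteq> \<infinity>"
      using emeasure_mono[of J UNIV "trans_kernel \<beta> \<phi> x"] tot by (auto simp: top_unique)
  qed (simp add: sp tot)
  also have "\<dots> \<le> 1 - ennreal (kap * h)"
  proof (rule ennreal_minus_mono)
    have "ennreal (kap * h) = ennreal kap * ennreal h" using kap_pos h by (simp add: ennreal_mult)
    also have "\<dots> \<le> ennreal kap * emeasure arc_measure J" by (intro mult_left_mono Jh) auto
    also have "\<dots> = (\<integral>\<^sup>+ z. ennreal kap * indicator J z \<partial>arc_measure)"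
      by (simp add: nn_integral_cmult_indicator)
    also have "\<dots> \<le> (\<integral>\<^sup>+ z. kd x z * indicator J z \<partial>arc_measure)"
      using JS by (intro nn_integral_mono) (auto split: split_indicator intro!: kd_lower m)
    also have "\<dots> = emeasure (trans_kernel \<beta> \<phi> x) J"
      by (rule kernel_density[OF m J, symmetric])
    finally show "ennreal (kap * h) \<le> emeasure (trans_kernel \<beta> \<phi> x) J" .
  qed simp
  also have "\<dots> = ennreal (1 - kap * h)"
    using kap_pos h by (subst ennreal_1[symmetric], subst ennreal_minus) auto
  finally show ?thesis using e1 by simp
qed

end

context chainsetup begin

interpretation P: prob_space M by (rule M)

lemma indZ: "P.indep_vars (\<lambda>_. borel) Z UNIV"
  using indep by (simp add: Z_def[abs_def])

lemma miss_step:
  assumes J[measurable]: "J \<in> sets borel" and JS: "J \<subseteq> sphere 0 1"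
    and Jh: "ennreal h \<le> emeasure arc_measure J" and h: "0 \<le> h"
  shows "emeasure M {\<omega>\<in>space M. \<forall>i\<in>{1..Suc n}. chain \<beta> X0 eps i \<omega> \<notin> J}
      \<le> ennreal (1 - kap * h) * emeasure M {\<omega>\<in>space M. \<forall>i\<in>{1..n}. chain \<beta> X0 eps i \<omega> \<notin> J}"
proof -
  define I where "I = {0..n}"
  define PI where "PI = PiM I (\<lambda>_. borel :: complex measure)"
  define Y where "Y \<omega> = restrict (\<lambda>i. Z i \<omega>) I" for \<omega>
  define W where "W = eps (Suc n)"
  have ind1: "P.indep_var PI Y (PiM {Suc n} (\<lambda>_. borel)) (\<lambda>\<omega>. restrict (\<lambda>i. Z i \<omega>) {Suc n})"
    unfolding PI_def Y_def using P.indep_var_restrict[OF indZ, of I "{Suc n}"] by (auto simp: I_def)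
  define PI' where "PI' = PiM {Suc n} (\<lambda>_. borel :: complex measure)"
  define W' where "W' \<omega> = restrict (\<lambda>i. Z i \<omega>) {Suc n}" for \<omega>
  have ind2: "P.indep_var PI Y PI' W'" using ind1 unfolding PI'_def W'_def .
  have Ym[measurable]: "Y \<in> measurable M PI" and W'm[measurable]: "W' \<in> measurable M PI'"
    using ind2 unfolding P.indep_var_distribution_eq by auto
  have Wm[measurable]: "W \<in> borel_measurable M" unfolding W_def by (rule eps_meas) simp
  have W'W: "W' \<omega> (Suc n) = W \<omega>" for \<omega> by (simp add: W'_def W_def Z_def)
  have jd: "distr M (PI \<Otimes>\<^sub>M PI') (\<lambda>\<omega>. (Y \<omega>, W' \<omega>)) = distr M PI Y \<Otimes>\<^sub>M distr M PI' W'"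
    using ind2 unfolding P.indep_var_distribution_eq by simp
  have DW: "distr M borel W = wrapped_cauchy \<phi>" using eps_distr by (simp add: W_def)
  interpret DW': prob_space "distr M PI' W'" by (rule P.prob_space_distr) simp
  interpret WC: finite_measure "wrapped_cauchy \<phi>"
  proof (rule finite_measureI)
    have "space (wrapped_cauchy \<phi>) = UNIV" by (simp add: wrapped_cauchy_def)
    then show "emeasure (wrapped_cauchy \<phi>) (space (wrapped_cauchy \<phi>)) \<noteq> \<infinity>" using wcprob by simp
  qed
  define Fn where "Fn y = (\<forall>i\<in>{1..n}. chainZ \<beta> i y \<notin> J)" for y
  have Fm[measurable]: "Measurable.pred PI Fn"
    unfolding Fn_def
  proof (intro pred_intros_finite)
    fix i assume "i \<in> {1..n}"
    then have [measurable]: "chainZ \<beta> i \<in> borel_measurable PI"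
      unfolding PI_def I_def by (intro chainZ_meas) auto
    show "Measurable.pred PI (\<lambda>x. chainZ \<beta> i x \<notin> J)" by measurable
  qed simp
  have cn[measurable]: "chainZ \<beta> n \<in> borel_measurable PI"
    unfolding PI_def I_def by (intro chainZ_meas) auto
  define H :: "(nat \<Rightarrow> complex) \<times> complex \<Rightarrow> ennreal" where "H p = indicator {y \<in> space PI. Fn y} (fst p) * indicator (- J) (mob \<beta> (chainZ \<beta> n (fst p)) * snd p)" for p
  have Hm[measurable]: "H \<in> borel_measurable (PI \<Otimes>\<^sub>M borel)"
    unfolding H_def by measurable
  have comp[measurable]: "(\<lambda>f. f (Suc n)) \<in> borel_measurable PI'"
    unfolding PI'_def by (rule measurable_component_singleton) simp
  have Hm2[measurable]: "(\<lambda>p. H (fst p, snd p (Suc n))) \<in> borel_measurable (PI \<Otimes>\<^sub>M PI')"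
    by measurable
  have chY: "chain \<beta> X0 eps i \<omega> = chainZ \<beta> i (Y \<omega>)" if "i \<le> n" for i \<omega>
  proof -
    have "(\<lambda>i. Z i \<omega>) = (\<lambda>i. if i = 0 then X0 \<omega> else eps i \<omega>)" by (auto simp: Z_def)
    then show ?thesis using that unfolding Y_def I_def by (simp add: chain_eq chainZ_restrict)
  qed
  have Yspace: "Y \<omega> \<in> space PI" if "\<omega> \<in> space M" for \<omega>
    using measurable_space[OF Ym that] .
  let ?F1 = "{\<omega>\<in>space M. \<forall>i\<in>{1..Suc n}. chain \<beta> X0 eps i \<omega> \<notin> J}"
  let ?F0 = "{\<omega>\<in>space M. \<forall>i\<in>{1..n}. chain \<beta> X0 eps i \<omega> \<notin> J}"
  have F0m[measurable]: "?F0 \<in> sets M" by measurable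
  have F1m[measurable]: "?F1 \<in> sets M" by measurable
  have "emeasure M ?F1 = (\<integral>\<^sup>+ \<omega>. indicator ?F1 \<omega> \<partial>M)" by simp
  also have "\<dots> = (\<integral>\<^sup>+ \<omega>. H (Y \<omega>, W \<omega>) \<partial>M)"
  proof (rule nn_integral_cong)
    fix \<omega> assume w: "\<omega> \<in> space M"
    have "chain \<beta> X0 eps (Suc n) \<omega> = mob \<beta> (chainZ \<beta> n (Y \<omega>)) * W \<omega>"
      by (simp add: chY W_def)
    moreover have "(\<forall>i\<in>{1..Suc n}. chain \<beta> X0 eps i \<omega> \<notin> J) \<longleftrightarrow>
        (\<forall>i\<in>{1..n}. chain \<beta> X0 eps i \<omega> \<notin> J) \<and> chain \<beta> X0 eps (Suc n) \<omega> \<notin> J"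
    proof -
      have s: "{1..Suc n} = insert (Suc n) {1..n}" by auto
      show ?thesis unfolding s by blast
    qed
    moreover have "(\<forall>i\<in>{1..n}. chain \<beta> X0 eps i \<omega> \<notin> J) \<longleftrightarrow> Fn (Y \<omega>)"
      unfolding Fn_def by (auto simp: chY)
    ultimately show "indicator ?F1 \<omega> = H (Y \<omega>, W \<omega>)"
      using w Yspace[OF w] unfolding H_def by (auto split: split_indicator)
  qed
  also have "\<dots> = (\<integral>\<^sup>+ \<omega>. H (Y \<omega>, W' \<omega> (Suc n)) \<partial>M)"
    by (simp add: W'W)
  also have "\<dots> = (\<integral>\<^sup>+ p. H (fst p, snd p (Suc n)) \<partial>distr M (PI \<Otimes>\<^sub>M PI') (\<lambda>\<omega>. (Y \<omega>, W' \<omega>)))"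
    by (subst nn_integral_distr) simp_all
  also have "\<dots> = (\<integral>\<^sup>+ p. H (fst p, snd p (Suc n)) \<partial>(distr M PI Y \<Otimes>\<^sub>M distr M PI' W'))"
    by (simp add: jd)
  also have "\<dots> = (\<integral>\<^sup>+ y. (\<integral>\<^sup>+ f. H (y, f (Suc n)) \<partial>distr M PI' W') \<partial>distr M PI Y)"
  proof -
    have "(\<lambda>p. H (fst p, snd p (Suc n))) \<in> borel_measurable (distr M PI Y \<Otimes>\<^sub>M distr M PI' W')"
      by (simp add: measurable_cong_sets[OF sets_pair_measure_cong[OF sets_distr sets_distr] refl])
    from DW'.nn_integral_fst[OF this] show ?thesis by simp
  qed
  also have "\<dots> = (\<integral>\<^sup>+ y. (\<integral>\<^sup>+ w. H (y, w) \<partial>wrapped_cauchy \<phi>) \<partial>distr M PI Y)"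
  proof (rule nn_integral_cong)
    fix y assume y: "y \<in> space (distr M PI Y)"
    then have y': "y \<in> space PI" by simp
    have [measurable]: "(\<lambda>w. H (y, w)) \<in> borel_measurable borel"
      using measurable_Pair2[OF Hm y'] by simp
    have [measurable]: "(\<lambda>f. f (Suc n)) \<in> borel_measurable PI'"
      unfolding PI'_def by (rule measurable_component_singleton) simp
    have "(\<integral>\<^sup>+ f. H (y, f (Suc n)) \<partial>distr M PI' W') = (\<integral>\<^sup>+ \<omega>. H (y, W' \<omega> (Suc n)) \<partial>M)"
      by (subst nn_integral_distr) auto
    also have "\<dots> = (\<integral>\<^sup>+ \<omega>. H (y, W \<omega>) \<partial>M)" by (simp add: W'W)
    also have "\<dots> = (\<integral>\<^sup>+ w. H (y, w) \<partial>distr M borel W)"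
      by (subst nn_integral_distr) auto
    finally show "(\<integral>\<^sup>+ f. H (y, f (Suc n)) \<partial>distr M PI' W') = (\<integral>\<^sup>+ w. H (y, w) \<partial>wrapped_cauchy \<phi>)"
      by (simp add: DW)
  qed
  also have "\<dots> = (\<integral>\<^sup>+ \<omega>. (\<integral>\<^sup>+ w. H (Y \<omega>, w) \<partial>wrapped_cauchy \<phi>) \<partial>M)"
  proof -
    have Gm: "(\<lambda>y. \<integral>\<^sup>+ w. H (y, w) \<partial>wrapped_cauchy \<phi>) \<in> borel_measurable PI"
      by (rule WC.borel_measurable_nn_integral_fst)
         (simp add: measurable_cong_sets[OF sets_pair_measure_cong[OF refl wc_sets] refl])
    show ?thesis by (rule nn_integral_distr) (simp_all add: Gm)
  qed
  also have "\<dots> \<le> (\<integral>\<^sup>+ \<omega>. ennreal (1 - kap * h) * indicator ?F0 \<omega> \<partial>M)"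
  proof (rule nn_integral_mono_AE)
    show "AE \<omega> in M. (\<integral>\<^sup>+ w. H (Y \<omega>, w) \<partial>wrapped_cauchy \<phi>) \<le> ennreal (1 - kap * h) * indicator ?F0 \<omega>"
      using chain_S AE_space
    proof eventually_elim
      case (elim \<omega>)
      have xS: "chainZ \<beta> n (Y \<omega>) \<in> sphere 0 1" using elim(1) chY[of n \<omega>, OF le_refl] by metis
      have "(\<lambda>w. mob \<beta> (chainZ \<beta> n (Y \<omega>)) * w) \<in> borel_measurable borel" by measurable
      from measurable_sets[OF this, of "- J"]
      have vm[measurable]: "(\<lambda>w. mob \<beta> (chainZ \<beta> n (Y \<omega>)) * w) -` (- J) \<in> sets borel" by simp
      have "(\<integral>\<^sup>+ w. H (Y \<omega>, w) \<partial>wrapped_cauchy \<phi>)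
          = (\<integral>\<^sup>+ w. indicator {y \<in> space PI. Fn y} (Y \<omega>) *
            indicator ((\<lambda>w. mob \<beta> (chainZ \<beta> n (Y \<omega>)) * w) -` (- J)) w \<partial>wrapped_cauchy \<phi>)"
        by (intro nn_integral_cong) (simp add: H_def split: split_indicator)
      also have "\<dots> = indicator {y \<in> space PI. Fn y} (Y \<omega>) *
            emeasure (wrapped_cauchy \<phi>) ((\<lambda>w. mob \<beta> (chainZ \<beta> n (Y \<omega>)) * w) -` (- J))"
        by (rule nn_integral_cmult_indicator) simp
      also have "emeasure (wrapped_cauchy \<phi>) ((\<lambda>w. mob \<beta> (chainZ \<beta> n (Y \<omega>)) * w) -` (- J))
          \<le> ennreal (1 - kap * h)"
        by (rule kernel_miss[OF J JS Jh h xS])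
      finally have "(\<integral>\<^sup>+ w. H (Y \<omega>, w) \<partial>wrapped_cauchy \<phi>) \<le> indicator {y \<in> space PI. Fn y} (Y \<omega>) * ennreal (1 - kap * h)"
        by (simp add: mult_left_mono)
      moreover have "indicator {y \<in> space PI. Fn y} (Y \<omega>) = (indicator ?F0 \<omega> :: ennreal)"
        using elim(2) Yspace[OF elim(2)] unfolding Fn_def by (auto simp: chY split: split_indicator)
      ultimately show ?case by (simp add: mult.commute)
    qed
  qed
  also have "\<dots> = ennreal (1 - kap * h) * emeasure M ?F0"
    by (rule nn_integral_cmult_indicator) simp
  finally show ?thesis .
qed

end

lemma cis_shift_int: "cis (t + 2 * pi * of_int q) = cis t"
proof -
  have "cis (t + 2 * pi * of_int q) = cis t * cis (2 * pi * of_int q)" by (rule cis_mult[symmetric])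
  also have "cis (2 * pi * of_int q) = 1" by (rule cis_multiple_2pi) simp
  finally show ?thesis by simp
qed

lemma cover:
  fixes K :: nat and h \<epsilon> :: real
  assumes K: "K \<ge> 1" and hK: "h = 2 * pi / K" and he: "h \<le> \<epsilon>" and y: "y \<in> sphere (0::complex) 1"
  shows "\<exists>j<K. \<forall>x \<in> cis ` {j * h .. (j + 1) * h}. dist y x \<le> \<epsilon>"
proof -
  obtain s where s: "0 \<le> s" "s \<le> 2 * pi" "y = cis s" using unit_cis_repr[of y] y by auto
  have hpos: "h > 0" using K hK by auto
  define m where "m = \<lceil>(s - \<epsilon>) / h\<rceil>"
  define j where "j = nat (m mod int K)"
  define q where "q = m div int K"
  have Kpos: "int K > 0" using K by simp
  have jK: "j < K" unfolding j_def using Kpos by (simp add: nat_less_iff)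
  have mq: "m = q * int K + int j"
    unfolding j_def q_def using Kpos by simp
  have Kh: "real K * h = 2 * pi" using hK K by simp
  have mh: "real_of_int m * h = real j * h + 2 * pi * real_of_int q"
  proof -
    have "real_of_int m * h = real_of_int q * (real K * h) + real j * h"
      unfolding mq by (simp add: algebra_simps)
    then show ?thesis unfolding Kh by (simp add: algebra_simps)
  qed
  have m1: "(s - \<epsilon>) / h \<le> real_of_int m" unfolding m_def by simp
  have m2: "real_of_int m < (s - \<epsilon>) / h + 1" unfolding m_def by linarith
  have lo: "s - \<epsilon> \<le> real_of_int m * h" using m1 hpos by (simp add: divide_le_eq)
  have "real_of_int m * h < ((s - \<epsilon>) / h + 1) * h" using m2 hpos by (intro mult_strict_right_mono) auto
  also have "((s - \<epsilon>) / h + 1) * h = s - \<epsilon> + h" using hpos by (simp add: field_simps)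
  finally have hi: "real_of_int m * h < s - \<epsilon> + h" .
  show ?thesis
  proof (intro exI[of _ j] conjI jK ballI)
    fix x assume "x \<in> cis ` {real j * h .. (real j + 1) * h}"
    then obtain t where t: "real j * h \<le> t" "t \<le> (real j + 1) * h" "x = cis t" by auto
    define t' where "t' = t + 2 * pi * real_of_int q"
    have x': "x = cis t'" unfolding t'_def using t by (simp add: cis_shift_int)
    have "s - \<epsilon> \<le> t'" using lo t mh unfolding t'_def by (simp add: algebra_simps)
    moreover have "t' \<le> s + \<epsilon>" using hi t mh he unfolding t'_def by (simp add: algebra_simps)
    ultimately have "\<bar>s - t'\<bar> \<le> \<epsilon>" by linarith
    moreover have "dist y x = cmod (cis s - cis t')" using s x' by (simp add: dist_norm)
    ultimately show "dist y x \<le> \<epsilon>" using chord_le[of s t'] by linarith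
  qed
qed

context chainsetup begin

lemma miss_bound:
  assumes J[measurable]: "J \<in> sets borel" and JS: "J \<subseteq> sphere 0 1"
    and Jh: "ennreal h \<le> emeasure arc_measure J" and h: "0 \<le> h" "h \<le> 2 * pi"
  shows "emeasure M {\<omega>\<in>space M. \<forall>i\<in>{1..n}. chain \<beta> X0 eps i \<omega> \<notin> J} \<le> ennreal ((1 - kap * h) ^ n)"
proof (induction n)
  case 0
  interpret P: prob_space M by (rule M)
  show ?case using P.emeasure_space_1 by (simp add: emeasure_mono P.emeasure_le_1)
next
  case (Suc n)
  have kh: "kap * h \<le> 1"
  proof -
    have "kap * h \<le> kap * (2 * pi)" using h kap_pos by (intro mult_left_mono) auto
    then show ?thesis using kap_cc cc_le1 by simp
  qed
  have "emeasure M {\<omega>\<in>space M. \<forall>i\<in>{1..Suc n}. chain \<beta> X0 eps i \<omega> \<notin> J}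
      \<le> ennreal (1 - kap * h) * emeasure M {\<omega>\<in>space M. \<forall>i\<in>{1..n}. chain \<beta> X0 eps i \<omega> \<notin> J}"
    by (rule miss_step[OF J JS Jh h(1)])
  also have "\<dots> \<le> ennreal (1 - kap * h) * ennreal ((1 - kap * h) ^ n)"
    by (intro mult_left_mono Suc.IH) simp
  also have "\<dots> = ennreal ((1 - kap * h) ^ Suc n)"
    using kh by (simp add: ennreal_mult[symmetric])
  finally show ?case .
qed

end

lemma infdist_finite_le:
  fixes A :: "complex set"
  assumes "finite A" "A \<noteq> {}"
  shows "infdist y A \<le> e \<longleftrightarrow> (\<exists>a\<in>A. dist y a \<le> e)"
proof
  assume "infdist y A \<le> e"
  moreover obtain a where "a \<in> A" "infdist y A = dist y a"
    using infdist_attains_inf[of A y] assms finite_imp_closed by blast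
  ultimately show "\<exists>a\<in>A. dist y a \<le> e" by auto
next
  assume "\<exists>a\<in>A. dist y a \<le> e"
  then show "infdist y A \<le> e" using infdist_le2 by blast
qed

lemma haus_char:
  fixes A :: "complex set"
  assumes fin: "finite A" and ne: "A \<noteq> {}"
  shows "haus_dist A (sphere 0 1) \<le> e \<longleftrightarrow>
    (\<forall>a\<in>A. infdist a (sphere 0 1) \<le> e) \<and> (\<forall>r::rat. \<exists>a\<in>A. dist (cis (of_rat r)) a \<le> e)"
proof -
  define S :: "complex set" where "S = sphere 0 1"
  have Sne: "S \<noteq> {}" unfolding S_def using unit_cis_repr[of 1] by (auto intro!: exI[of _ 1])
  have t1: "(INF y\<in>S. dist x y) = infdist x S" for x using Sne by (simp add: infdist_def)
  have t2: "(INF y\<in>A. dist x y) = infdist x A" for x using ne by (simp add: infdist_def)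
  obtain a0 where a0: "a0 \<in> A" using ne by auto
  have T1: "(SUP x\<in>A. INF y\<in>S. dist x y) \<le> e \<longleftrightarrow> (\<forall>a\<in>A. infdist a S \<le> e)"
    unfolding t1 using fin ne by (subst cSUP_le_iff) (auto intro: bdd_above_finite)
  have bdd: "bdd_above ((\<lambda>x. infdist x A) ` S)"
  proof (rule bdd_aboveI2)
    fix x assume "x \<in> S"
    have "infdist x A \<le> dist x a0" using a0 by (rule infdist_le)
    also have "\<dots> \<le> norm x + norm a0" by (simp add: dist_norm norm_triangle_ineq4)
    also have "\<dots> = 1 + norm a0" using \<open>x \<in> S\<close> by (simp add: S_def)
    finally show "infdist x A \<le> 1 + norm a0" .
  qed
  have T2: "(SUP x\<in>S. INF y\<in>A. dist x y) \<le> e \<longleftrightarrow> (\<forall>y\<in>S. infdist y A \<le> e)"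
    unfolding t2 using Sne bdd by (subst cSUP_le_iff) auto
  have T3: "(\<forall>y\<in>S. infdist y A \<le> e) \<longleftrightarrow> (\<forall>r::rat. infdist (cis (of_rat r)) A \<le> e)"
  proof
    assume "\<forall>y\<in>S. infdist y A \<le> e"
    then show "\<forall>r::rat. infdist (cis (of_rat r)) A \<le> e" by (auto simp: S_def)
  next
    assume r: "\<forall>r::rat. infdist (cis (of_rat r)) A \<le> e"
    have cl: "closed {t. infdist (cis t) A \<le> e}"
      by (intro closed_Collect_le continuous_intros continuous_on_infdist)
    have "\<rat> \<subseteq> {t. infdist (cis t) A \<le> e}" using r by (auto simp: Rats_def)
    then have "closure \<rat> \<subseteq> {t. infdist (cis t) A \<le> e}" using cl by (rule closure_minimal)
    then have all: "infdist (cis t) A \<le> e" for t by (auto simp: Rats_closure_real)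
    show "\<forall>y\<in>S. infdist y A \<le> e"
    proof
      fix y assume "y \<in> S"
      then obtain s where "y = cis s" using unit_cis_repr[of y] by (auto simp: S_def)
      then show "infdist y A \<le> e" using all by simp
    qed
  qed
  show ?thesis
    unfolding haus_dist_def S_def[symmetric] max_def
    using T1 T2 T3 infdist_finite_le[OF fin ne] by (auto split: if_splits)
qed

lemma infdist_meas[measurable]: "(\<lambda>x::complex. infdist x A) \<in> borel_measurable borel"
  by (intro borel_measurable_continuous_onI continuous_on_infdist continuous_intros)

context chainsetup begin

lemma haus_set:
  assumes n: "n \<ge> 1"
  shows "{\<omega> \<in> space M. haus_dist ((\<lambda>i. chain \<beta> X0 eps i \<omega>) ` {1..n}) (sphere 0 1) \<le> e} =
    {\<omega> \<in> space M. (\<forall>i\<in>{1..n}. infdist (chain \<beta> X0 eps i \<omega>) (sphere 0 1) \<le> e) \<and>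
        (\<forall>r::rat. \<exists>i\<in>{1..n}. dist (cis (of_rat r)) (chain \<beta> X0 eps i \<omega>) \<le> e)}"
  using n by (subst haus_char) auto

lemma haus_set_meas:
  assumes n: "n \<ge> 1"
  shows "{\<omega> \<in> space M. haus_dist ((\<lambda>i. chain \<beta> X0 eps i \<omega>) ` {1..n}) (sphere 0 1) \<le> e} \<in> sets M"
  unfolding haus_set[OF n] by measurable

end

context chainsetup begin

interpretation P: prob_space M by (rule M)

lemma cover_prob:
  fixes K :: nat
  assumes e: "0 < e" and n: "n \<ge> 1" and K: "K = nat \<lceil>2 * pi / e\<rceil>" and h: "h = 2 * pi / K"
  shows "measure M {\<omega> \<in> space M. haus_dist ((\<lambda>i. chain \<beta> X0 eps i \<omega>) ` {1..n}) (sphere 0 1) \<le> e}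
          \<ge> 1 - real K * (1 - kap * h) ^ n"
proof -
  let ?G = "{\<omega> \<in> space M. haus_dist ((\<lambda>i. chain \<beta> X0 eps i \<omega>) ` {1..n}) (sphere 0 1) \<le> e}"
  have Gm: "?G \<in> sets M" by (rule haus_set_meas[OF n])
  have pe: "2 * pi / e > 0" using e by simp
  have ce: "real_of_int \<lceil>2 * pi / e\<rceil> \<ge> 2 * pi / e" by (rule le_of_int_ceiling)
  then have cpos: "\<lceil>2 * pi / e\<rceil> > 0" using pe by linarith
  have rK: "real K = real_of_int \<lceil>2 * pi / e\<rceil>" using K cpos by simp
  have K1: "K \<ge> 1" using K cpos by linarith
  have Kpos: "real K > 0" using K1 by simp
  have hpos: "0 < h" using h Kpos by simp
  have he: "h \<le> e"
  proof -
    have p3: "0 < real_of_int \<lceil>2 * pi / e\<rceil> * (2 * pi) / e" using cpos e by simp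
    have "h = 2 * pi / real K" by (simp add: h)
    also have "\<dots> \<le> 2 * pi / (2 * pi / e)" using ce rK pe p3 by (intro divide_left_mono) auto
    also have "\<dots> = e" using e by simp
    finally show ?thesis .
  qed
  have Kh: "real K * h = 2 * pi" using h Kpos by simp
  have h2: "h \<le> 2 * pi"
  proof -
    have "1 * h \<le> real K * h" using K1 hpos by (intro mult_right_mono) auto
    then show ?thesis using Kh by simp
  qed
  have kh: "kap * h \<le> 1"
  proof -
    have "kap * h \<le> kap * (2 * pi)" using h2 kap_pos by (intro mult_left_mono) auto
    then show ?thesis using kap_cc cc_le1 by simp
  qed
  define J where "J j = cis ` {real j * h .. (real j + 1) * h}" for j :: nat
  have Jm[measurable]: "J j \<in> sets borel" for j
  proof -
    have "closed (J j)" unfolding J_def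
      by (intro compact_imp_closed compact_continuous_image continuous_intros) auto
    then show ?thesis by auto
  qed
  have JS: "J j \<subseteq> sphere 0 1" for j unfolding J_def by auto
  have Jh: "ennreal h \<le> emeasure arc_measure (J j)" if "j < K" for j
  proof -
    have "(real j + 1) * h \<le> real K * h" using that hpos by (intro mult_right_mono) auto
    then have "ennreal ((real j + 1) * h - real j * h) \<le> emeasure arc_measure (J j)"
      unfolding J_def using hpos Kh by (intro arc_interval) auto
    then show ?thesis by (simp add: algebra_simps)
  qed
  define B where "B j = {\<omega>\<in>space M. \<forall>i\<in>{1..n}. chain \<beta> X0 eps i \<omega> \<notin> J j}" for j
  have Bm[measurable]: "B j \<in> sets M" for j unfolding B_def by measurable
  have mB: "measure M (B j) \<le> (1 - kap * h) ^ n" if "j < K" for j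
  proof -
    have "emeasure M (B j) \<le> ennreal ((1 - kap * h) ^ n)"
      unfolding B_def using hpos h2 by (intro miss_bound[OF Jm JS Jh[OF that]]) auto
    then show ?thesis using kh by (simp add: P.emeasure_eq_measure)
  qed
  define U where "U = (\<Union>j\<in>{..<K}. B j)"
  have Um[measurable]: "U \<in> sets M" unfolding U_def by measurable
  have mU: "measure M U \<le> real K * (1 - kap * h) ^ n"
  proof -
    have "measure M U \<le> (\<Sum>j\<in>{..<K}. measure M (B j))"
      unfolding U_def by (rule measure_UNION_le) auto
    also have "\<dots> \<le> (\<Sum>j\<in>{..<K}. (1 - kap * h) ^ n)" by (intro sum_mono mB) auto
    also have "\<dots> = real K * (1 - kap * h) ^ n" by simp
    finally show ?thesis .
  qed
  have ae: "AE \<omega> in M. \<omega> \<in> space M - U \<longrightarrow> \<omega> \<in> ?G"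
    using chain_S
  proof eventually_elim
    case (elim \<omega>)
    show ?case
    proof
      assume w: "\<omega> \<in> space M - U"
      then have hit: "\<exists>i\<in>{1..n}. chain \<beta> X0 eps i \<omega> \<in> J j" if "j < K" for j
        using that unfolding U_def B_def by auto
      have fin: "finite ((\<lambda>i. chain \<beta> X0 eps i \<omega>) ` {1..n})" by simp
      have ne: "(\<lambda>i. chain \<beta> X0 eps i \<omega>) ` {1..n} \<noteq> {}" using n by auto
      have c1: "\<forall>a\<in>(\<lambda>i. chain \<beta> X0 eps i \<omega>) ` {1..n}. infdist a (sphere 0 1) \<le> e"
        using elim e by (auto simp: infdist_zero)
      have c2: "\<forall>r::rat. \<exists>a\<in>(\<lambda>i. chain \<beta> X0 eps i \<omega>) ` {1..n}. dist (cis (of_rat r)) a \<le> e"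
      proof
        fix r :: rat
        obtain j where j: "j < K" "\<forall>x \<in> cis ` {real j * h .. (real j + 1) * h}. dist (cis (of_rat r)) x \<le> e"
          using cover[OF K1 h he, of "cis (of_rat r)"] by auto
        obtain i where i: "i \<in> {1..n}" "chain \<beta> X0 eps i \<omega> \<in> J j" using hit[OF j(1)] by auto
        show "\<exists>a\<in>(\<lambda>i. chain \<beta> X0 eps i \<omega>) ` {1..n}. dist (cis (of_rat r)) a \<le> e"
        proof -
          have "dist (cis (of_rat r)) (chain \<beta> X0 eps i \<omega>) \<le> e"
            using i(2) j(2) unfolding J_def by blast
          then show ?thesis using i(1) by blast
        qed
      qed
      show "\<omega> \<in> ?G" using w haus_char[OF fin ne] c1 c2 by auto
    qed
  qed
  have "emeasure M (space M - U) \<le> emeasure M ?G"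
    by (rule emeasure_mono_AE[OF ae Gm])
  then have "measure M (space M - U) \<le> measure M ?G"
    by (simp add: P.emeasure_eq_measure)
  moreover have "measure M (space M - U) = 1 - measure M U" by (rule P.prob_compl[OF Um])
  ultimately show ?thesis using mU by linarith
qed

end

interpretation arcF: finite_measure arc_measure by simp

lemma arc_measure_UNIV: "measure arc_measure UNIV = 2 * pi"
  using arc_UNIV by (simp add: arcF.emeasure_eq_measure)

lemma arc_ball_lower:
  assumes u: "u \<in> sphere (0::complex) 1" and e: "0 < e"
  shows "min e pi \<le> measure arc_measure (sphere 0 1 \<inter> cball u e)"
proof -
  obtain s where s: "0 \<le> s" "s \<le> 2 * pi" "u = cis s" using unit_cis_repr[of u] u by auto
  define m where "m = min e pi"
  have m: "0 < m" "m \<le> e" "m \<le> pi" using e unfolding m_def by auto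
  obtain a b where ab: "0 \<le> a" "a \<le> b" "b \<le> 2 * pi" "b - a = m" "\<And>t. t \<in> {a..b} \<Longrightarrow> \<bar>t - s\<bar> \<le> m"
  proof (cases "s \<le> pi")
    case True
    show ?thesis by (rule that[of s "s + m"]) (use True s m in auto)
  next
    case False
    show ?thesis by (rule that[of "s - m" s]) (use False s m in auto)
  qed
  have sub: "cis ` {a..b} \<subseteq> sphere 0 1 \<inter> cball u e"
  proof
    fix x assume "x \<in> cis ` {a..b}"
    then obtain t where t: "t \<in> {a..b}" "x = cis t" by auto
    have "dist u x = cmod (cis s - cis t)" using s t by (simp add: dist_norm)
    also have "\<dots> \<le> \<bar>s - t\<bar>" by (rule chord_le)
    also have "\<dots> \<le> e" using ab(5)[OF t(1)] m by (simp add: abs_minus_commute)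
    finally show "x \<in> sphere 0 1 \<inter> cball u e" using t by auto
  qed
  have cl: "closed (cis ` {a..b})"
    by (intro compact_imp_closed compact_continuous_image continuous_intros) auto
  have "ennreal m \<le> emeasure arc_measure (cis ` {a..b})"
    using arc_interval[OF ab(1-3)] ab(4) by simp
  then have "m \<le> measure arc_measure (cis ` {a..b})"
    using m by (simp add: arcF.emeasure_eq_measure)
  also have "\<dots> \<le> measure arc_measure (sphere 0 1 \<inter> cball u e)"
    by (intro arcF.finite_measure_mono sub) (auto intro: borel_closed)
  finally show ?thesis by (simp add: m_def)
qed

lemma v_lower: "ereal (pi / 5) \<le> v_const 5"
  unfolding v_const_def
proof (intro INF_greatest)
  fix u e assume u: "u \<in> sphere (0::complex) 1" and e: "e \<in> {0<..<(5::real)}"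
  have e0: "0 < e" "e < 5" using e by auto
  have l: "min e pi \<le> measure arc_measure (sphere 0 1 \<inter> cball u e)" by (rule arc_ball_lower[OF u e0(1)])
  have "pi / 5 \<le> min e pi / e"
  proof (cases "e \<le> pi")
    case True
    then show ?thesis using e0 pi_less_4 by (simp add: min_def)
  next
    case False
    then have "min e pi = pi" by simp
    moreover have "pi / 5 \<le> pi / e" using e0 by (intro divide_left_mono) auto
    ultimately show ?thesis by simp
  qed
  also have "\<dots> \<le> measure arc_measure (sphere 0 1 \<inter> cball u e) / e"
    using l e0 by (intro divide_right_mono) auto
  finally show "ereal (pi / 5) \<le> ereal (measure arc_measure (sphere 0 1 \<inter> cball u e) / e)" by simp
qed

lemma v_upper: "v_const 5 \<le> ereal (4 * pi / 9)"
proof -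
  have "v_const 5 \<le> (INF e\<in>{0<..<(5::real)}. ereal (measure arc_measure (sphere 0 1 \<inter> cball 1 e) / e))"
    unfolding v_const_def by (rule INF_lower) simp
  also have "\<dots> \<le> ereal (measure arc_measure (sphere 0 1 \<inter> cball 1 (9/2)) / (9/2))"
    by (rule INF_lower) simp
  also have "\<dots> \<le> ereal (4 * pi / 9)"
  proof -
    have "measure arc_measure (sphere 0 1 \<inter> cball 1 (9/2)) \<le> measure arc_measure UNIV"
      by (rule arcF.bounded_measure[simplified])
    then show ?thesis using arc_measure_UNIV by simp
  qed
  finally show ?thesis .
qed

lemma final_arith:
  fixes \<alpha> \<epsilon> \<kappa> v h :: real and n K :: nat
  assumes a: "0 < \<alpha>" "\<alpha> < 1" and e: "0 < \<epsilon>" "\<epsilon> < 1" and k: "0 < \<kappa>" "\<kappa> * (2 * pi) \<le> 1"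
    and v: "0 < v" "v \<le> 4 * pi / 9" and K: "K = nat \<lceil>2 * pi / \<epsilon>\<rceil>" and h: "h = 2 * pi / K"
    and nb: "real n \<ge> 2 / (\<kappa> * v * \<epsilon>) * (ln (1 / \<alpha>) + ln (4 / (\<epsilon> * \<kappa> * v)))"
  shows "n \<ge> 1 \<and> real K * (1 - \<kappa> * h) ^ n \<le> \<alpha>"
proof -
  have pe: "2 * pi / \<epsilon> > 0" using e by simp
  have c1: "2 * pi / \<epsilon> \<le> real_of_int \<lceil>2 * pi / \<epsilon>\<rceil>" and c2: "real_of_int \<lceil>2 * pi / \<epsilon>\<rceil> - 1 < 2 * pi / \<epsilon>"
    using ceiling_correct[of "2 * pi / \<epsilon>"] by auto
  have cpos: "\<lceil>2 * pi / \<epsilon>\<rceil> > 0" using c1 pe by linarith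
  have rK: "real K = real_of_int \<lceil>2 * pi / \<epsilon>\<rceil>" using K cpos by simp
  have K1: "real K \<ge> 1" using K cpos by simp
  have Kpos: "real K > 0" using K1 by simp
  have "real K * \<epsilon> < (2 * pi / \<epsilon> + 1) * \<epsilon>" using rK c2 e by (intro mult_strict_right_mono) auto
  also have "\<dots> = 2 * pi + \<epsilon>" using e by (simp add: field_simps)
  also have "\<dots> \<le> 9" using e pi_less_4 by linarith
  finally have Ke: "real K * \<epsilon> \<le> 9" by simp
  have Kh: "real K * h = 2 * pi" using h Kpos by simp
  have hpos: "h > 0" using h Kpos by simp
  have h2pi: "h \<le> 2 * pi"
  proof -
    have "1 * h \<le> real K * h" using K1 hpos by (intro mult_right_mono) auto
    then show ?thesis using Kh by simp
  qed
  have kh1: "\<kappa> * h \<le> 1"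
  proof -
    have "\<kappa> * h \<le> \<kappa> * (2 * pi)" using h2pi k by (intro mult_left_mono) auto
    then show ?thesis using k by linarith
  qed
  have hv: "\<epsilon> * v \<le> 2 * h"
  proof -
    have "\<epsilon> * v * real K \<le> \<epsilon> * (4 * pi / 9) * real K" using v e Kpos by (intro mult_right_mono mult_left_mono) auto
    also have "\<dots> = (real K * \<epsilon>) * (4 * pi / 9)" by simp
    also have "\<dots> \<le> 9 * (4 * pi / 9)" using Ke by (intro mult_right_mono) auto
    also have "\<dots> = 2 * h * real K" using Kh by (simp add: algebra_simps)
    finally show ?thesis using Kpos by simp
  qed
  define P where "P = \<epsilon> * \<kappa> * v"
  have Ppos: "P > 0" unfolding P_def using e k v by simp
  have kv: "\<kappa> * v \<le> 2 / 9"
  proof -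
    have "\<kappa> * v \<le> \<kappa> * (4 * pi / 9)" using k v by (intro mult_left_mono) auto
    also have "\<dots> = (\<kappa> * (2 * pi)) * (2 / 9)" by simp
    also have "\<dots> \<le> 1 * (2 / 9)" using k by (intro mult_right_mono) auto
    finally show ?thesis by simp
  qed
  have Ple: "P \<le> 2 * \<epsilon> / 9"
  proof -
    have "P = \<epsilon> * (\<kappa> * v)" unfolding P_def by simp
    also have "\<dots> \<le> \<epsilon> * (2 / 9)" using kv e by (intro mult_left_mono) auto
    finally show ?thesis by simp
  qed
  define B where "B = ln (1 / \<alpha>) + ln (4 / P)"
  have lnA: "ln (1 / \<alpha>) > 0" using a by simp
  have "4 / P \<ge> 4 / (2 * \<epsilon> / 9)" using Ppos Ple by (intro divide_left_mono) auto
  moreover have "4 / (2 * \<epsilon> / 9) > 1" using e by (simp add: field_simps)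
  ultimately have "4 / P > 1" by linarith
  then have lnP: "ln (4 / P) > 0" by (rule ln_gt_zero)
  have Bpos: "B > 0" unfolding B_def using lnA lnP by simp
  have nb': "real n \<ge> 2 / P * B" using nb unfolding B_def P_def by (simp add: mult.commute mult.left_commute)
  have "2 / P * B > 0" using Ppos Bpos by simp
  then have npos: "n \<ge> 1" using nb' by (cases n) auto
  have khn: "\<kappa> * h * real n \<ge> B"
  proof -
    have "\<kappa> * h * real n \<ge> \<kappa> * h * (2 / P * B)" using nb' k hpos by (intro mult_left_mono) auto
    moreover have "\<kappa> * h * (2 / P * B) = (2 * h / (\<epsilon> * v)) * B"
      unfolding P_def using k e v by (simp add: field_simps)
    moreover have "2 * h / (\<epsilon> * v) \<ge> 1" using hv e v by simp
    ultimately show ?thesis using Bpos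
      by (smt (verit) mult_le_cancel_right1)
  qed
  have "(1 - \<kappa> * h) ^ n \<le> (exp (- (\<kappa> * h))) ^ n"
    using kh1 by (intro power_mono exp_minus_ge) auto
  also have "\<dots> = exp (- (\<kappa> * h * real n))" by (simp add: exp_of_nat_mult[symmetric] mult.commute)
  also have "\<dots> \<le> exp (- B)" using khn by simp
  also have "exp (- B) = \<alpha> * (P / 4)"
  proof -
    have "- B = ln \<alpha> + ln (P / 4)" unfolding B_def using a Ppos by (simp add: ln_div)
    then show ?thesis using a Ppos by (simp add: exp_add)
  qed
  finally have pw: "(1 - \<kappa> * h) ^ n \<le> \<alpha> * (P / 4)" .
  have "real K * (1 - \<kappa> * h) ^ n \<le> real K * (\<alpha> * (P / 4))" using pw Kpos by (intro mult_left_mono) auto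
  also have "\<dots> = \<alpha> / 4 * (real K * P)" by simp
  also have "real K * P \<le> real K * (2 * \<epsilon> / 9)" using Ple Kpos by (intro mult_left_mono) auto
  also have "\<dots> = (real K * \<epsilon>) * (2 / 9)" by simp
  also have "\<dots> \<le> 9 * (2 / 9)" using Ke by (intro mult_right_mono) auto
  finally have "real K * (1 - \<kappa> * h) ^ n \<le> \<alpha> / 4 * 2" using a by (simp add: mult_left_mono)
  then show ?thesis using npos a by simp
qed


theorem proposition5p2:
  fixes \<beta> \<phi> :: real and M :: "'a measure" and X0 :: "'a \<Rightarrow> complex"
    and eps :: "nat \<Rightarrow> 'a \<Rightarrow> complex"
  assumes beta: "-1 < \<beta>" "\<beta> < 1"
    and phi: "0 \<le> \<phi>" "\<phi> < 1"
    and M: "prob_space M"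
    and X0_circ: "\<forall>\<omega>\<in>space M. X0 \<omega> \<in> sphere 0 1"
    and indep: "prob_space.indep_vars M (\<lambda>_. borel) (\<lambda>i. if i = 0 then X0 else eps i) UNIV"
    and eps_distr: "\<forall>i\<ge>1. distr M borel (eps i) = wrapped_cauchy \<phi>"
  shows "\<exists>\<mu>. invariant_distr \<beta> \<phi> \<mu> \<and> (\<forall>\<mu>'. invariant_distr \<beta> \<phi> \<mu>' \<longrightarrow> \<mu>' = \<mu>) \<and>
     (\<exists>\<epsilon>0>0. 0 < v_const \<epsilon>0 \<and> v_const \<epsilon>0 < \<infinity> \<and>
        (distr M borel X0 = \<mu> \<longrightarrow>
          (\<forall>\<alpha>. 0 < \<alpha> \<and> \<alpha> < 1 \<longrightarrow>
            (\<exists>\<epsilon>1>0. \<forall>\<epsilon>. 0 < \<epsilon> \<and> \<epsilon> < \<epsilon>1 \<longrightarrow>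
              (\<forall>n::nat.
                 let v = real_of_ereal (v_const \<epsilon>0);
                     \<kappa> = (1 / (2 * pi)) * ((1 - \<phi>) / (1 + \<phi>))
                 in real n \<ge> 2 / (\<kappa> * v * \<epsilon>) * (ln (1 / \<alpha>) + ln (4 / (\<epsilon> * \<kappa> * v))) \<longrightarrow>
                    measure M {\<omega> \<in> space M.
                       haus_dist ((\<lambda>i. chain \<beta> X0 eps i \<omega>) ` {1..n}) (sphere 0 1) \<le> \<epsilon>}
                      \<ge> 1 - \<alpha>)))))"
proof -
  interpret P: prob_space M by (rule M)
  have "\<forall>i. (if i = 0 then X0 else eps i) \<in> borel_measurable M"
    using indep unfolding P.indep_vars_def by auto
  then have "(if (1::nat) = 0 then X0 else eps 1) \<in> borel_measurable M" by blast
  then have e1m: "eps 1 \<in> borel_measurable M" by (metis one_neq_zero)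
  have "emeasure (distr M borel (eps 1)) UNIV = emeasure M (space M)"
    using e1m by (subst emeasure_distr) (auto simp del: One_nat_def)
  then have wcprob: "emeasure (wrapped_cauchy \<phi>) UNIV = 1"
    using eps_distr P.emeasure_space_1 by simp
  interpret W: wcsetup \<beta> \<phi> by unfold_locales (use beta phi wcprob in auto)
  interpret C: chainsetup \<beta> \<phi> M X0 eps by unfold_locales (use M X0_circ indep eps_distr in auto)
  let ?mu = "density arc_measure W.gfix"
  have vl: "ereal (pi / 5) \<le> v_const 5" by (rule v_lower)
  have vu: "v_const 5 \<le> ereal (4 * pi / 9)" by (rule v_upper)
  obtain vr where vr: "v_const 5 = ereal vr" using vl vu by (cases "v_const 5") auto
  have vr1: "pi / 5 \<le> vr" and vr2: "vr \<le> 4 * pi / 9" using vl vu vr by auto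
  have vpos: "0 < vr" using vr1 by (smt (verit) pi_gt_zero divide_pos_pos)
  have kapdef: "(1 / (2 * pi)) * ((1 - \<phi>) / (1 + \<phi>)) = W.kap" by (simp add: W.kap_def)
  have kap2: "W.kap * (2 * pi) \<le> 1" using W.kap_cc W.cc_le1 by simp
  show ?thesis
  proof (intro exI[of _ ?mu] conjI allI impI)
    show "invariant_distr \<beta> \<phi> ?mu" by (rule W.mu_invariant)
  next
    fix \<mu>' assume "invariant_distr \<beta> \<phi> \<mu>'"
    then show "\<mu>' = ?mu" by (rule W.unique_inv)
  next
    show "\<exists>\<epsilon>0>0. 0 < v_const \<epsilon>0 \<and> v_const \<epsilon>0 < \<infinity> \<and>
        (distr M borel X0 = ?mu \<longrightarrow>
          (\<forall>\<alpha>. 0 < \<alpha> \<and> \<alpha> < 1 \<longrightarrow>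
            (\<exists>\<epsilon>1>0. \<forall>\<epsilon>. 0 < \<epsilon> \<and> \<epsilon> < \<epsilon>1 \<longrightarrow>
              (\<forall>n::nat.
                 let v = real_of_ereal (v_const \<epsilon>0);
                     \<kappa> = (1 / (2 * pi)) * ((1 - \<phi>) / (1 + \<phi>))
                 in real n \<ge> 2 / (\<kappa> * v * \<epsilon>) * (ln (1 / \<alpha>) + ln (4 / (\<epsilon> * \<kappa> * v))) \<longrightarrow>
                    measure M {\<omega> \<in> space M.
                       haus_dist ((\<lambda>i. chain \<beta> X0 eps i \<omega>) ` {1..n}) (sphere 0 1) \<le> \<epsilon>}
                      \<ge> 1 - \<alpha>))))"
    proof (rule exI[of _ "5::real"], intro conjI impI allI)
      show "(0::real) < 5" by simp
      show "0 < v_const 5" using vr vpos by simp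
      show "v_const 5 < \<infinity>" using vr by simp
      fix \<alpha> :: real assume a: "0 < \<alpha> \<and> \<alpha> < 1"
      show "\<exists>\<epsilon>1>0. \<forall>\<epsilon>. 0 < \<epsilon> \<and> \<epsilon> < \<epsilon>1 \<longrightarrow>
              (\<forall>n::nat.
                 let v = real_of_ereal (v_const 5);
                     \<kappa> = (1 / (2 * pi)) * ((1 - \<phi>) / (1 + \<phi>))
                 in real n \<ge> 2 / (\<kappa> * v * \<epsilon>) * (ln (1 / \<alpha>) + ln (4 / (\<epsilon> * \<kappa> * v))) \<longrightarrow>
                    measure M {\<omega> \<in> space M.
                       haus_dist ((\<lambda>i. chain \<beta> X0 eps i \<omega>) ` {1..n}) (sphere 0 1) \<le> \<epsilon>}
                      \<ge> 1 - \<alpha>)"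
      proof (intro exI[of _ "1::real"] conjI allI impI)
        show "(0::real) < 1" by simp
        fix \<epsilon> :: real and n :: nat
        assume e: "0 < \<epsilon> \<and> \<epsilon> < 1"
        show "let v = real_of_ereal (v_const 5);
                     \<kappa> = (1 / (2 * pi)) * ((1 - \<phi>) / (1 + \<phi>))
                 in real n \<ge> 2 / (\<kappa> * v * \<epsilon>) * (ln (1 / \<alpha>) + ln (4 / (\<epsilon> * \<kappa> * v))) \<longrightarrow>
                    measure M {\<omega> \<in> space M.
                       haus_dist ((\<lambda>i. chain \<beta> X0 eps i \<omega>) ` {1..n}) (sphere 0 1) \<le> \<epsilon>}
                      \<ge> 1 - \<alpha>"
          unfolding Let_def vr kapdef real_of_ereal.simps
        proof
          assume nb: "real n \<ge> 2 / (W.kap * vr * \<epsilon>) * (ln (1 / \<alpha>) + ln (4 / (\<epsilon> * W.kap * vr)))"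
          define K where "K = nat \<lceil>2 * pi / \<epsilon>\<rceil>"
          define h where "h = 2 * pi / real K"
          have fa: "n \<ge> 1 \<and> real K * (1 - W.kap * h) ^ n \<le> \<alpha>"
            using a e W.kap_pos kap2 vpos vr2 K_def h_def nb by (intro final_arith) auto
          have "measure M {\<omega> \<in> space M. haus_dist ((\<lambda>i. chain \<beta> X0 eps i \<omega>) ` {1..n}) (sphere 0 1) \<le> \<epsilon>}
                \<ge> 1 - real K * (1 - W.kap * h) ^ n"
            using e fa K_def h_def by (intro C.cover_prob) auto
          then show "measure M {\<omega> \<in> space M. haus_dist ((\<lambda>i. chain \<beta> X0 eps i \<omega>) ` {1..n}) (sphere 0 1) \<le> \<epsilon>}
                \<ge> 1 - \<alpha>" using fa by linarith
        qed
      qed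
    qed
  qed
qed

end
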